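(* Define $f_1(m_1,m_2)=33m_1+49m_2$ and, for every $t\geq 2$, $$f_t(m_1,m_2)=f_{t-1}\big(f_{t-1}(32m_1+49m_2,\,m_1+m_2-1),\,32m_1+49m_2\big).$$ Let $m_1,m_2$ and $n_1,\ldots,n_t$ be positive integers such that $m_2\geq n_i\geq 2\lceil \log (f_t(m_1,m_2))\rceil+2$ for each $1\leq i\leq t$. Then $$R(C_{n_1},\ldots,C_{n_t},K_{m_1,m_2})\leq f_t(m_1,m_2).$$
   Context: $C_k$ denotes the cycle on $k$ vertices and $K_{a,b}$ the complete bipartite graph with parts of sizes $a$ and $b$. For graphs $G_1,\ldots,G_k$, the Ramsey number $R(G_1,\ldots,G_k)$ is the smallest integer $N$ such that for every coloring of the edges of the complete graph $K_N$ with colors $1,\ldots,k$ there is, for some $i$, a copy of $G_i$ all of whose edges have color $i$. $\log$ denotes the logarithm to base $2$. *)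

theory Defs
  imports Complex_Main
begin

text \<open>A (finite simple) graph is given by a vertex set and a set of edges, each edge a 2-set.\<close>
type_synonym graph = "nat set \<times> nat set set"

definition cycle_graph :: "nat \<Rightarrow> graph" where
  "cycle_graph n = ({0..<n}, {{j, (j + 1) mod n} | j. j < n})"

definition complete_bipartite :: "nat \<Rightarrow> nat \<Rightarrow> graph" where
  "complete_bipartite a b = ({0..<a+b}, {{i, j} | i j. i < a \<and> a \<le> j \<and> j < a + b})"

definition is_colouring :: "nat \<Rightarrow> nat \<Rightarrow> (nat \<Rightarrow> nat \<Rightarrow> nat) \<Rightarrow> bool" where
  "is_colouring N k c \<longleftrightarrow>
     (\<forall>x y. x < N \<longrightarrow> y < N \<longrightarrow> x \<noteq> y \<longrightarrow> c x y = c y x \<and> c x y \<in> {1..k})"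

definition has_mono_copy :: "nat \<Rightarrow> (nat \<Rightarrow> nat \<Rightarrow> nat) \<Rightarrow> nat \<Rightarrow> graph \<Rightarrow> bool" where
  "has_mono_copy N c col G \<longleftrightarrow>
     (\<exists>\<phi>. inj_on \<phi> (fst G) \<and> \<phi> ` fst G \<subseteq> {..<N} \<and>
          (\<forall>x y. {x, y} \<in> snd G \<longrightarrow> c (\<phi> x) (\<phi> y) = col))"

text \<open>Ramsey number R(G_1,...,G_k), graphs given as a list (G_i = Gs ! (i-1)).\<close>
definition ramsey_number :: "graph list \<Rightarrow> nat" where
  "ramsey_number Gs = (LEAST N. \<forall>c. is_colouring N (length Gs) c \<longrightarrow>
       (\<exists>i < length Gs. has_mono_copy N c (i + 1) (Gs ! i)))"

fun f_seq :: "nat \<Rightarrow> nat \<Rightarrow> nat \<Rightarrow> nat" where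
  "f_seq 0 m1 m2 = 0"
| "f_seq (Suc 0) m1 m2 = 33 * m1 + 49 * m2"
| "f_seq (Suc (Suc t)) m1 m2 =
     f_seq (Suc t) (f_seq (Suc t) (32 * m1 + 49 * m2) (m1 + m2 - 1)) (32 * m1 + 49 * m2)"

end

theory Submission imports Defs begin

definition joined :: "(nat \<Rightarrow> nat \<Rightarrow> bool) \<Rightarrow> nat set \<Rightarrow> nat set \<Rightarrow> bool" where
  "joined E X Y \<longleftrightarrow> (\<exists>x\<in>X. \<exists>y\<in>Y. E x y)"

definition HF :: "(nat \<Rightarrow> nat \<Rightarrow> bool) \<Rightarrow> nat \<Rightarrow> nat \<Rightarrow> nat set \<Rightarrow> nat set \<Rightarrow> bool" where
  "HF E m1 m2 A B \<longleftrightarrow> (\<forall>X Y. X \<subseteq> A \<longrightarrow> Y \<subseteq> B \<longrightarrow> finite X \<longrightarrow> finite Y \<longrightarrow>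
      m1 \<le> card X \<longrightarrow> m2 \<le> card Y \<longrightarrow> joined E X Y)"

lemma HFD: "HF E m1 m2 A B \<Longrightarrow> X \<subseteq> A \<Longrightarrow> Y \<subseteq> B \<Longrightarrow> finite X \<Longrightarrow> finite Y \<Longrightarrow>
   m1 \<le> card X \<Longrightarrow> m2 \<le> card Y \<Longrightarrow> \<exists>x\<in>X. \<exists>y\<in>Y. E x y"
  unfolding HF_def joined_def by blast

definition valid :: "(nat \<Rightarrow> nat \<Rightarrow> bool) \<Rightarrow> nat set \<Rightarrow> nat set \<Rightarrow> nat list \<Rightarrow> nat set \<Rightarrow> bool" where
  "valid E W S U T \<longleftrightarrow> S \<union> set U \<union> T = W \<and> S \<inter> set U = {} \<and> S \<inter> T = {} \<and> set U \<inter> T = {}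
     \<and> distinct U \<and> successively E U \<and> (\<forall>s\<in>S. \<forall>t\<in>T. \<not> E s t)"

lemma dfs_reach:
  assumes "finite W"
  shows "valid E W S U T \<Longrightarrow> card S \<le> k \<Longrightarrow> k \<le> card W \<Longrightarrow>
     \<exists>S' U' T'. valid E W S' U' T' \<and> card S' = k"
proof (induction "2 * card T + length U" arbitrary: S U T rule: less_induct)
  case less
  have fS: "finite S" and fT: "finite T" using less.prems(1) assms unfolding valid_def
    by (metis finite_Un)+
  show ?case
  proof (cases "card S = k")
    case True then show ?thesis using less.prems by blast
  next
    case False
    hence lt: "card S < k" using less.prems by simp
    have "S \<noteq> W"
      using lt less.prems by auto
    hence ne: "set U \<union> T \<noteq> {}" using less.prems(1) unfolding valid_def by auto
    show ?thesis
    proof (cases "U = []")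
      case True
      then obtain t where t: "t \<in> T" using ne by auto
      have v: "valid E W S [t] (T - {t})" using less.prems(1) t True unfolding valid_def by auto
      have "card T \<ge> 1" using t fT by (metis One_nat_def Suc_leI card_gt_0_iff empty_iff)
      hence "2 * card (T - {t}) + length [t] < 2 * card T + length U"
        using t fT True by (simp add: card_Diff_singleton)
      from less.hyps[OF this v less.prems(2,3)] show ?thesis .
    next
      case Unn: False
      define x where "x = last U"
      show ?thesis
      proof (cases "\<exists>t\<in>T. E x t")
        case True
        then obtain t where t: "t \<in> T" "E x t" by auto
        have v: "valid E W S (U @ [t]) (T - {t})" using less.prems(1) t Unn unfolding valid_def x_def
          by (auto simp: successively_append_iff)
        have "card T \<ge> 1" using t fT by (metis One_nat_def Suc_leI card_gt_0_iff empty_iff)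
        hence "2 * card (T - {t}) + length (U @ [t]) < 2 * card T + length U"
          using t fT by (simp add: card_Diff_singleton)
        from less.hyps[OF this v less.prems(2,3)] show ?thesis .
      next
        case False
        have U: "U = butlast U @ [x]" using Unn x_def by simp
        have xS: "x \<notin> S" using less.prems(1) Unn x_def unfolding valid_def by auto
        have v: "valid E W (insert x S) (butlast U) T"
        proof -
          have d: "distinct (butlast U @ [x])" using less.prems(1) U unfolding valid_def by metis
          have s: "successively E (butlast U @ [x])" using less.prems(1) U unfolding valid_def by metis
          have bs: "set (butlast U) \<union> {x} = set U" by (metis U set_append empty_set list.simps(15))
          have xb: "x \<notin> set (butlast U)" using d by simp
          show ?thesis using less.prems(1) False d s bs xb xS unfolding valid_def
            by (auto simp: successively_append_iff)
        qed
        have "2 * card T + length (butlast U) < 2 * card T + length U" using Unn by simp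
        moreover have "card (insert x S) \<le> k" using lt xS fS by simp
        ultimately show ?thesis using less.hyps v less.prems(3) by blast
      qed
    qed
  qed
qed

lemma card_split_bound:
  assumes "finite B" "B \<subseteq> X \<union> Y \<union> Z"
  shows "card B \<le> card (X \<inter> B) + card (Y \<inter> B) + card (Z \<inter> B)"
proof -
  have "B = (X \<inter> B) \<union> (Y \<inter> B) \<union> (Z \<inter> B)" using assms by auto
  hence "card B \<le> card ((X \<inter> B) \<union> (Y \<inter> B)) + card (Z \<inter> B)"
    by (metis card_Un_le)
  also have "\<dots> \<le> card (X \<inter> B) + card (Y \<inter> B) + card (Z \<inter> B)"
    using card_Un_le by (metis add_le_mono1)
  finally show ?thesis .
qed

lemma card_part:
  assumes "finite S" "S \<subseteq> A \<union> B" "A \<inter> B = {}"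
  shows "card S = card (S \<inter> A) + card (S \<inter> B)"
proof -
  have "S = (S \<inter> A) \<union> (S \<inter> B)" using assms by auto
  moreover have "(S \<inter> A) \<inter> (S \<inter> B) = {}" using assms by auto
  ultimately show ?thesis using assms(1) card_Un_disjoint
    by (metis finite_Int)
qed

lemma long_path_side:
  assumes fA: "finite A" and fB: "finite B" and dis: "A \<inter> B = {}"
    and sym: "\<forall>u v. E u v \<longrightarrow> E v u"
    and hf: "HF E m1 m2 B A" and m1: "m1 \<ge> 1" and m2: "m2 \<ge> 1"
    and vS: "valid E (A \<union> B) S U T" and cS: "m2 \<le> card (S \<inter> A)" "card S = 2*m2 - 1"
  shows "card B + 2 \<le> length U + m1 + m2"
proof -
  have fW: "finite (A \<union> B)" using fA fB by simp
  have SW: "S \<subseteq> A \<union> B" and TW: "T \<subseteq> A \<union> B" and UW: "set U \<subseteq> A \<union> B"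
    using vS unfolding valid_def by auto
  have fS: "finite S" using SW fW finite_subset by blast
  have fT: "finite T" using TW fW finite_subset by blast
  have noe: "\<forall>s\<in>S. \<forall>t\<in>T. \<not> E s t" using vS unfolding valid_def by auto
  have "card S = card (S \<inter> A) + card (S \<inter> B)"
    using card_part[OF fS SW dis] .
  hence sb: "card (S \<inter> B) \<le> m2 - 1" using cS by linarith
  have tb: "card (T \<inter> B) \<le> m1 - 1"
  proof (rule ccontr)
    assume "\<not> ?thesis"
    hence "m1 \<le> card (T \<inter> B)" by linarith
    then obtain x y where "x \<in> T \<inter> B" "y \<in> S \<inter> A" "E x y"
      using HFD[OF hf, of "T \<inter> B" "S \<inter> A"] fS fT cS by auto
    thus False using noe sym by blast
  qed
  have "B \<subseteq> S \<union> set U \<union> T" using vS unfolding valid_def by auto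
  hence "card B \<le> card (S \<inter> B) + card (set U \<inter> B) + card (T \<inter> B)"
    using card_split_bound[OF fB] by blast
  moreover have "card (set U \<inter> B) \<le> length U"
    by (metis card_length card_mono finite_set inf_le1 le_trans)
  ultimately show ?thesis using sb tb m1 m2 by linarith
qed

lemma long_path:
  assumes fA: "finite A" and fB: "finite B" and dis: "A \<inter> B = {}"
    and sym: "\<forall>u v. E u v \<longrightarrow> E v u"
    and hf1: "HF E m1 m2 B A" and hf2: "HF E m1 m2 A B" and m1: "m1 \<ge> 1" and m2: "m2 \<ge> 1"
    and cW: "2 * m2 \<le> card A"
  shows "\<exists>U. distinct U \<and> set U \<subseteq> A \<union> B \<and> successively E U \<and>
       min (card A) (card B) + 2 \<le> length U + m1 + m2"
proof -
  have fW: "finite (A \<union> B)" using fA fB by simp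
  have v0: "valid E (A \<union> B) {} [] (A \<union> B)" unfolding valid_def by auto
  have "2*m2 - 1 \<le> card (A \<union> B)" using cW card_mono[OF fW, of A] by auto
  then obtain S U T where vS: "valid E (A \<union> B) S U T" and cS: "card S = 2*m2 - 1"
    using dfs_reach[OF fW v0] by fastforce
  have SW: "S \<subseteq> A \<union> B" using vS unfolding valid_def by auto
  have fS: "finite S" using SW fW finite_subset by blast
  have "card S = card (S \<inter> A) + card (S \<inter> B)"
    using card_part[OF fS SW dis] .
  hence "m2 \<le> card (S \<inter> A) \<or> m2 \<le> card (S \<inter> B)" using cS m2 by linarith
  hence "card B + 2 \<le> length U + m1 + m2 \<or> card A + 2 \<le> length U + m1 + m2"
  proof
    assume "m2 \<le> card (S \<inter> A)"
    thus ?thesis using long_path_side[OF fA fB dis sym hf1 m1 m2 vS] cS by blast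
  next
    assume a: "m2 \<le> card (S \<inter> B)"
    have "valid E (B \<union> A) S U T" using vS by (simp add: Un_commute)
    thus ?thesis using long_path_side[OF fB fA _ sym hf2 m1 m2] cS dis a by (simp add: Int_commute)
  qed
  hence "min (card A) (card B) + 2 \<le> length U + m1 + m2" by linarith
  moreover have "distinct U \<and> set U \<subseteq> A \<union> B \<and> successively E U" using vS unfolding valid_def by auto
  ultimately show ?thesis by blast
qed

definition nbr :: "(nat \<Rightarrow> nat \<Rightarrow> bool) \<Rightarrow> nat set \<Rightarrow> nat set \<Rightarrow> nat set" where
  "nbr E Y S = {v \<in> Y - S. \<exists>u\<in>S. E u v}"

lemma nbr_sub: "nbr E Y S \<subseteq> Y" unfolding nbr_def by auto

lemma no_mid_side:
  assumes fA: "finite FA" and fB: "finite FB" and dis: "FA \<inter> FB = {}"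
    and sym: "\<forall>u v. E u v \<longrightarrow> E v u"
    and hf: "HF E m1 m2 FB FA" and cB: "m1 + 8*m2 \<le> card FB"
    and T: "T \<subseteq> FA \<union> FB" "card T \<le> 4*m2" "card (nbr E (FA \<union> FB) T) \<le> card T"
    and TA: "m2 \<le> card (T \<inter> FA)"
  shows False
proof -
  let ?F = "FA \<union> FB"
  have fF: "finite ?F" using fA fB by simp
  have fT: "finite T" using T(1) fF finite_subset by blast
  define Z where "Z = FB - T - nbr E ?F T"
  have "FB \<subseteq> Z \<union> T \<union> nbr E ?F T" unfolding Z_def by blast
  moreover have "finite (Z \<union> T \<union> nbr E ?F T)"
    using fT fB finite_subset[OF nbr_sub fF] unfolding Z_def by simp
  ultimately have "card FB \<le> card (Z \<union> T \<union> nbr E ?F T)" by (meson card_mono)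
  also have "\<dots> \<le> card Z + card T + card (nbr E ?F T)"
    using card_Un_le[of "Z \<union> T" "nbr E ?F T"] card_Un_le[of Z T] by linarith
  finally have "m1 \<le> card Z" using T cB by linarith
  moreover have "finite Z" unfolding Z_def using fB by simp
  moreover have "Z \<subseteq> FB" unfolding Z_def by auto
  ultimately obtain x y where xy: "x \<in> Z" "y \<in> T \<inter> FA" "E x y"
    using HFD[OF hf, of Z "T \<inter> FA"] fT TA by auto
  have "E y x" using sym xy(3) by blast
  hence "x \<in> nbr E ?F T" using xy(1,2) unfolding nbr_def Z_def by auto
  thus False using xy(1) unfolding Z_def by auto
qed

lemma no_mid:
  assumes fA: "finite FA" and fB: "finite FB" and dis: "FA \<inter> FB = {}"
    and sym: "\<forall>u v. E u v \<longrightarrow> E v u"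
    and hf1: "HF E m1 m2 FB FA" and hf2: "HF E m1 m2 FA FB"
    and cA: "m1 + 8*m2 \<le> card FA" and cB: "m1 + 8*m2 \<le> card FB"
    and T: "T \<subseteq> FA \<union> FB" "2*m2 \<le> card T" "card T \<le> 4*m2" "card (nbr E (FA \<union> FB) T) \<le> card T"
  shows False
proof -
  have fT: "finite T" using T(1) fA fB finite_subset by blast
  have "card T = card (T \<inter> FA) + card (T \<inter> FB)" using card_part[OF fT T(1) dis] .
  hence "m2 \<le> card (T \<inter> FA) \<or> m2 \<le> card (T \<inter> FB)" using T by linarith
  thus False
  proof
    assume "m2 \<le> card (T \<inter> FA)"
    thus False using no_mid_side[OF fA fB dis sym hf1 cB T(1) T(3) T(4)] by blast
  next
    assume a: "m2 \<le> card (T \<inter> FB)"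
    have t1: "T \<subseteq> FB \<union> FA" using T by auto
    have t2: "card (nbr E (FB \<union> FA) T) \<le> card T" using T by (simp add: Un_commute)
    have d2: "FB \<inter> FA = {}" using dis by auto
    show False using no_mid_side[OF fB fA d2 sym hf2 cA t1 T(3) t2 a] .
  qed
qed

lemma nbr_union:
  assumes "B \<subseteq> F" "S \<subseteq> F - B"
  shows "nbr E F (B \<union> S) \<subseteq> nbr E F B \<union> nbr E (F - B) S"
  using assms unfolding nbr_def by auto

lemma expand_core:
  assumes fA: "finite FA" and fB: "finite FB" and dis: "FA \<inter> FB = {}"
    and sym: "\<forall>u v. E u v \<longrightarrow> E v u"
    and hf1: "HF E m1 m2 FB FA" and hf2: "HF E m1 m2 FA FB"
    and cA: "m1 + 8*m2 \<le> card FA" and cB: "m1 + 8*m2 \<le> card FB" and m2: "m2 \<ge> 1"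
  shows "\<exists>B0. B0 \<subseteq> FA \<union> FB \<and> card B0 < 2*m2 \<and>
     (\<forall>S. S \<subseteq> (FA \<union> FB) - B0 \<longrightarrow> S \<noteq> {} \<longrightarrow> card S < 2*m2 \<longrightarrow>
          card S < card (nbr E ((FA \<union> FB) - B0) S))"
proof -
  let ?F = "FA \<union> FB"
  have fF: "finite ?F" using fA fB by simp
  define C where "C = {B. B \<subseteq> ?F \<and> card B < 2*m2 \<and> card (nbr E ?F B) \<le> card B}"
  have "{} \<in> C" unfolding C_def nbr_def using m2 by auto
  have "\<exists>k. (\<exists>B\<in>C. card B = k) \<and> (\<forall>y. (\<exists>B\<in>C. card B = y) \<longrightarrow> y \<le> k)"
    apply (rule ex_has_greatest_nat[where k=0 and b="2*m2"])
    using \<open>{} \<in> C\<close> apply force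
    unfolding C_def by auto
  then obtain B0 where B0: "B0 \<in> C" and mx: "\<And>B. B \<in> C \<Longrightarrow> card B \<le> card B0" by blast
  have B0F: "B0 \<subseteq> ?F" and cB0: "card B0 < 2*m2" and nB0: "card (nbr E ?F B0) \<le> card B0"
    using B0 unfolding C_def by auto
  have fB0: "finite B0" using B0F fF finite_subset by blast
  have "\<forall>S. S \<subseteq> ?F - B0 \<longrightarrow> S \<noteq> {} \<longrightarrow> card S < 2*m2 \<longrightarrow> card S < card (nbr E (?F - B0) S)"
  proof (intro allI impI, rule ccontr)
    fix S assume S: "S \<subseteq> ?F - B0" "S \<noteq> {}" "card S < 2*m2" and "\<not> card S < card (nbr E (?F - B0) S)"
    hence nS: "card (nbr E (?F - B0) S) \<le> card S" by simp
    have fS: "finite S" using S(1) fF finite_subset by blast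
    have cS0: "card S > 0" using fS S(2) by (simp add: card_gt_0_iff)
    let ?T = "B0 \<union> S"
    have cT: "card ?T = card B0 + card S" using S(1) fB0 fS by (subst card_Un_disjoint) auto
    have "card (nbr E ?F ?T) \<le> card (nbr E ?F B0 \<union> nbr E (?F - B0) S)"
      apply (rule card_mono)
      using nbr_sub[of E ?F B0] nbr_sub[of E "?F - B0" S] fF apply (meson finite_Diff finite_UnI finite_subset)
      using nbr_union[OF B0F S(1)] by blast
    also have "\<dots> \<le> card (nbr E ?F B0) + card (nbr E (?F - B0) S)" by (rule card_Un_le)
    finally have nT: "card (nbr E ?F ?T) \<le> card ?T" using cT nB0 nS by linarith
    have TF: "?T \<subseteq> ?F" using B0F S(1) by auto
    show False
    proof (cases "card ?T < 2*m2")
      case True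
      hence "?T \<in> C" using TF nT unfolding C_def by auto
      hence "card ?T \<le> card B0" by (rule mx)
      thus False using cT cS0 by linarith
    next
      case False
      thus False using no_mid[OF fA fB dis sym hf1 hf2 cA cB TF _ _ nT] cT cB0 S(3) by linarith
    qed
  qed
  thus ?thesis using B0F cB0 by blast
qed

definition pth :: "(nat \<Rightarrow> nat \<Rightarrow> bool) \<Rightarrow> nat set \<Rightarrow> nat \<Rightarrow> nat \<Rightarrow> nat list \<Rightarrow> bool" where
  "pth E Y x u ps \<longleftrightarrow> ps \<noteq> [] \<and> hd ps = x \<and> last ps = u \<and> distinct ps \<and> set ps \<subseteq> Y \<and> successively E ps"

definition ball :: "(nat \<Rightarrow> nat \<Rightarrow> bool) \<Rightarrow> nat set \<Rightarrow> nat \<Rightarrow> nat \<Rightarrow> nat set" where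
  "ball E Y x k = {u. \<exists>ps. pth E Y x u ps \<and> length ps \<le> Suc k}"

lemma successively_take: "successively P xs \<Longrightarrow> successively P (take n xs)"
  unfolding successively_conv_nth by auto

lemma successively_drop: "successively P xs \<Longrightarrow> successively P (drop n xs)"
  unfolding successively_conv_nth by (auto simp: add.commute)

lemma ball_sub: "ball E Y x k \<subseteq> Y"
  unfolding ball_def pth_def by (auto intro: last_in_set)

lemma ball_fin: "finite Y \<Longrightarrow> finite (ball E Y x k)"
  by (rule finite_subset[OF ball_sub])

lemma ball_0: "x \<in> Y \<Longrightarrow> ball E Y x 0 = {x}"
proof
  assume x: "x \<in> Y"
  show "ball E Y x 0 \<subseteq> {x}"
  proof
    fix u assume "u \<in> ball E Y x 0"
    then obtain ps where "pth E Y x u ps" "length ps \<le> 1" unfolding ball_def by auto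
    thus "u \<in> {x}" unfolding pth_def by (cases ps) auto
  qed
  show "{x} \<subseteq> ball E Y x 0" using x unfolding ball_def pth_def
    by (auto intro!: exI[of _ "[x]"])
qed

lemma ball_mono: "ball E Y x k \<subseteq> ball E Y x (Suc k)"
  unfolding ball_def by fastforce

lemma pth_prefix:
  assumes "pth E Y x u ps" "v \<in> set ps"
  shows "\<exists>qs. pth E Y x v qs \<and> length qs \<le> length ps"
proof -
  obtain i where i: "i < length ps" "ps ! i = v" using assms(2) by (metis in_set_conv_nth)
  let ?qs = "take (Suc i) ps"
  have ne: "?qs \<noteq> []" using i by (cases ps) auto
  have "hd ?qs = hd ps" using i by (cases ps) auto
  hence h: "hd ?qs = x" using assms(1) unfolding pth_def by simp
  have l: "last ?qs = v" using i by (simp add: take_Suc_conv_app_nth)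
  have "pth E Y x v ?qs"
    using assms(1) ne h l unfolding pth_def
    by (auto simp: successively_take dest: in_set_takeD)
  thus ?thesis by auto
qed

lemma nbr_ball: "nbr E Y (ball E Y x k) \<subseteq> ball E Y x (Suc k)"
proof
  fix v assume "v \<in> nbr E Y (ball E Y x k)"
  then obtain u where v: "v \<in> Y" "v \<notin> ball E Y x k" "u \<in> ball E Y x k" "E u v"
    unfolding nbr_def by auto
  then obtain ps where ps: "pth E Y x u ps" "length ps \<le> Suc k" unfolding ball_def by auto
  have "v \<notin> set ps"
  proof
    assume "v \<in> set ps"
    then obtain qs where "pth E Y x v qs" "length qs \<le> length ps" using pth_prefix ps(1) by blast
    hence "v \<in> ball E Y x k" using ps(2) unfolding ball_def by auto
    thus False using v(2) by simp
  qed
  hence "pth E Y x v (ps @ [v])" using ps(1) v unfolding pth_def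
    by (auto simp: successively_append_iff)
  thus "v \<in> ball E Y x (Suc k)" using ps(2) unfolding ball_def by (auto intro!: exI[of _ "ps @ [v]"])
qed

lemma ball_grow:
  assumes fY: "finite Y"
  shows "card (ball E Y x k) + card (nbr E Y (ball E Y x k)) \<le> card (ball E Y x (Suc k))"
proof -
  have "ball E Y x k \<inter> nbr E Y (ball E Y x k) = {}" unfolding nbr_def by auto
  hence "card (ball E Y x k \<union> nbr E Y (ball E Y x k)) = card (ball E Y x k) + card (nbr E Y (ball E Y x k))"
    using ball_fin[OF fY] finite_subset[OF nbr_sub fY] by (simp add: card_Un_disjoint)
  moreover have "ball E Y x k \<union> nbr E Y (ball E Y x k) \<subseteq> ball E Y x (Suc k)"
    using ball_mono nbr_ball by blast
  hence "card (ball E Y x k \<union> nbr E Y (ball E Y x k)) \<le> card (ball E Y x (Suc k))"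
    using card_mono[OF ball_fin[OF fY]] by blast
  ultimately show ?thesis by linarith
qed

lemma bfs_sphere:
  assumes fY: "finite Y" and x: "x \<in> Y" and m2: "m2 \<ge> 1"
    and ex: "\<forall>S. S \<subseteq> Y \<longrightarrow> S \<noteq> {} \<longrightarrow> card S < 2*m2 \<longrightarrow> card S < card (nbr E Y S)"
  shows "\<exists>j L. 2^j \<le> 2*m2 \<and> L \<subseteq> Y \<and> m2 \<le> card L \<and> finite L \<and>
     (\<forall>u\<in>L. \<exists>ps. pth E Y x u ps \<and> length ps = Suc j)"
proof -
  let ?b = "\<lambda>k. card (ball E Y x k)"
  have ne: "\<And>k. ball E Y x k \<noteq> {}"
  proof -
    fix k have "pth E Y x x [x]" using x unfolding pth_def by simp
    hence "x \<in> ball E Y x k" unfolding ball_def by (auto intro!: exI[of _ "[x]"])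
    thus "ball E Y x k \<noteq> {}" by blast
  qed
  have step: "\<And>k. ?b k < 2*m2 \<Longrightarrow> 2 * ?b k + 1 \<le> ?b (Suc k)"
  proof -
    fix k assume a: "?b k < 2*m2"
    have "?b k < card (nbr E Y (ball E Y x k))" by (rule ex[rule_format, OF ball_sub ne a])
    thus "2 * ?b k + 1 \<le> ?b (Suc k)" using ball_grow[OF fY, of E x k] by linarith
  qed
  have bmono: "\<And>k. ?b k \<le> ?b (Suc k)" using card_mono[OF ball_fin[OF fY] ball_mono] by blast
  have pw: "\<And>k. ?b k < 2*m2 \<Longrightarrow> 2^(Suc k) \<le> ?b k + 1"
  proof -
    fix k show "?b k < 2*m2 \<Longrightarrow> 2^(Suc k) \<le> ?b k + 1"
    proof (induction k)
      case 0 thus ?case using ball_0[OF x, of E] by simp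
    next
      case (Suc k)
      hence "?b k < 2*m2" using bmono[of k] by linarith
      hence "2^(Suc k) \<le> ?b k + 1" using Suc.IH by blast
      moreover have "2 * ?b k + 1 \<le> ?b (Suc k)" using step \<open>?b k < 2*m2\<close> by blast
      ultimately show ?case by simp
    qed
  qed
  have ex0: "2*m2 \<le> ?b (2*m2)"
  proof (rule ccontr)
    assume na: "\<not> 2*m2 \<le> ?b (2*m2)"
    hence "2^(Suc (2*m2)) \<le> ?b (2*m2) + 1" using pw by simp
    moreover have "2*m2 < 2^(2*m2)" by (rule less_exp)
    ultimately show False using na by simp
  qed
  define j where "j = (LEAST k. 2*m2 \<le> ?b k)"
  have jP: "2*m2 \<le> ?b j" unfolding j_def by (rule LeastI[of "\<lambda>k. 2*m2 \<le> ?b k", OF ex0])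
  have j0: "j \<noteq> 0"
  proof
    assume "j = 0"
    hence "2*m2 \<le> card (ball E Y x 0)" using jP by simp
    thus False using ball_0[OF x, of E] m2 by simp
  qed
  then obtain i where ji: "j = Suc i" by (cases j) auto
  have bi: "?b i < 2*m2"
  proof (rule ccontr)
    assume "\<not> ?thesis" hence "j \<le> i" unfolding j_def by (simp add: Least_le)
    thus False using ji by simp
  qed
  have pj: "2^j \<le> 2*m2" using pw[OF bi] bi ji by simp
  define L where "L = ball E Y x j - ball E Y x i"
  have "card L = ?b j - ?b i" unfolding L_def ji
    using ball_mono ball_fin[OF fY] by (simp add: card_Diff_subset)
  moreover have "2 * ?b i + 1 \<le> ?b j" using step[OF bi] ji by simp
  ultimately have "m2 \<le> card L" using jP by linarith
  moreover have "L \<subseteq> Y" unfolding L_def using ball_sub by blast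
  moreover have "finite L" unfolding L_def using ball_fin[OF fY] by blast
  moreover have "\<forall>u\<in>L. \<exists>ps. pth E Y x u ps \<and> length ps = Suc j"
  proof
    fix u assume "u \<in> L"
    then obtain ps where ps: "pth E Y x u ps" "length ps \<le> Suc j" and nu: "u \<notin> ball E Y x i"
      unfolding L_def ball_def by auto
    have "\<not> length ps \<le> Suc i" using ps(1) nu unfolding ball_def by auto
    thus "\<exists>ps. pth E Y x u ps \<and> length ps = Suc j" using ps ji by (intro exI[of _ ps]) simp
  qed
  ultimately show ?thesis using pj by blast
qed

lemma path_parity:
  assumes "set ps \<subseteq> Q \<union> R" "Q \<inter> R = {}" "successively E ps"
    "\<forall>u\<in>Q. \<forall>v\<in>Q. \<not> E u v" "\<forall>u\<in>R. \<forall>v\<in>R. \<not> E u v"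
  shows "i < length ps \<Longrightarrow> (ps ! i \<in> Q) = ((ps ! 0 \<in> Q) = even i)"
proof (induction i)
  case 0 thus ?case by simp
next
  case (Suc i)
  have e: "E (ps ! i) (ps ! Suc i)" using successively_nth[OF assms(3) Suc.prems] .
  have "ps ! i \<in> set ps" "ps ! Suc i \<in> set ps" using Suc.prems by simp_all
  hence i1: "ps ! i \<in> Q \<union> R" "ps ! Suc i \<in> Q \<union> R" using assms(1) by blast+
  have "(ps ! Suc i \<in> Q) = (ps ! i \<notin> Q)"
    using e i1 assms(2,4,5) by blast
  thus ?case using Suc by auto
qed

lemma HF_mono: "HF E m1 m2 A B \<Longrightarrow> A' \<subseteq> A \<Longrightarrow> B' \<subseteq> B \<Longrightarrow> HF E m1 m2 A' B'"
  unfolding HF_def by (intro allI impI) (meson subset_trans)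

lemma hf_bound1:
  assumes "HF E m1 m2 A B" "finite S" "S \<subseteq> A" "Z \<subseteq> B" "finite Z" "m2 \<le> card Z"
    "\<forall>s\<in>S. \<forall>z\<in>Z. \<not> E s z"
  shows "card S < m1"
proof (rule ccontr)
  assume "\<not> card S < m1"
  hence "m1 \<le> card S" by simp
  thus False using HFD[OF assms(1,3,4,2,5) _ assms(6)] assms(7) by blast
qed

lemma hf_bound2:
  assumes "HF E m1 m2 A B" "finite S" "S \<subseteq> B" "Z \<subseteq> A" "finite Z" "m1 \<le> card Z"
    "\<forall>z\<in>Z. \<forall>s\<in>S. \<not> E z s"
  shows "card S < m2"
proof (rule ccontr)
  assume "\<not> card S < m2"
  hence "m2 \<le> card S" by simp
  thus False using HFD[OF assms(1,4,3,5,2) assms(6)] assms(7) by blast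
qed

lemma pigeon2:
  assumes "finite P0" "m1 + m2 - 1 \<le> card P0" "card {p\<in>P0. \<not> f p} < m1" "card {p\<in>P0. \<not> g p} < m2"
  shows "\<exists>p\<in>P0. f p \<and> g p"
proof (rule ccontr)
  assume "\<not> ?thesis"
  hence "P0 \<subseteq> {p\<in>P0. \<not> f p} \<union> {p\<in>P0. \<not> g p}" by blast
  hence "card P0 \<le> card ({p\<in>P0. \<not> f p} \<union> {p\<in>P0. \<not> g p})"
    using assms(1) by (simp add: card_mono)
  also have "\<dots> \<le> card {p\<in>P0. \<not> f p} + card {p\<in>P0. \<not> g p}" by (rule card_Un_le)
  finally show False using assms(2-4) by linarith
qed

lemma parity_count:
  assumes "r < (2::nat)"
  shows "N div 2 \<le> card {s. s < N \<and> s mod 2 = r}"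
proof -
  have "(\<lambda>k. 2*k + r) ` {..<N div 2} \<subseteq> {s. s < N \<and> s mod 2 = r}"
  proof
    fix x assume "x \<in> (\<lambda>k. 2*k + r) ` {..<N div 2}"
    then obtain k where k: "k < N div 2" "x = 2*k + r" by auto
    have "2 * (N div 2) \<le> N" by simp
    hence "x < N" using k assms by linarith
    moreover have "x mod 2 = r" using k assms by simp
    ultimately show "x \<in> {s. s < N \<and> s mod 2 = r}" by simp
  qed
  moreover have "inj_on (\<lambda>k. 2*k + r) {..<N div 2}" by (auto simp: inj_on_def)
  moreover have "finite {s. s < N \<and> s mod 2 = r}" by simp
  ultimately have "card ((\<lambda>k. 2*k + r) ` {..<N div 2}) \<le> card {s. s < N \<and> s mod 2 = r}"
    by (simp add: card_mono)
  moreover have "card ((\<lambda>k. 2*k + r) ` {..<N div 2}) = N div 2"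
    using \<open>inj_on _ _\<close> by (simp add: card_image)
  ultimately show ?thesis by simp
qed

lemma find_pos:
  assumes d: "distinct U" and len: "N + c \<le> length U" and b1: "card B1 < m1" and b2: "card B2 < m1"
    and f1: "finite B1" and f2: "finite B2" and N: "4*m1 \<le> N" and r: "r < (2::nat)"
  shows "\<exists>s<N. s mod 2 = r \<and> U ! s \<notin> B1 \<and> U ! (s + c) \<notin> B2"
proof (rule ccontr)
  assume na: "\<not> ?thesis"
  let ?I = "{s. s < N \<and> s mod 2 = r}"
  let ?I1 = "{s\<in>?I. U ! s \<in> B1}"
  let ?I2 = "{s\<in>?I. U ! (s + c) \<in> B2}"
  have "?I \<subseteq> ?I1 \<union> ?I2" using na by blast
  hence "card ?I \<le> card (?I1 \<union> ?I2)" by (simp add: card_mono)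
  also have "\<dots> \<le> card ?I1 + card ?I2" by (rule card_Un_le)
  also have "card ?I1 \<le> card B1"
  proof (rule card_inj_on_le[of "\<lambda>s. U ! s"])
    show "inj_on (\<lambda>s. U ! s) ?I1" using d len by (auto simp: inj_on_def nth_eq_iff_index_eq)
  qed (use f1 in auto)
  also have "card ?I2 \<le> card B2"
  proof (rule card_inj_on_le[of "\<lambda>s. U ! (s + c)"])
    show "inj_on (\<lambda>s. U ! (s + c)) ?I2" using d len by (auto simp: inj_on_def nth_eq_iff_index_eq)
  qed (use f2 in auto)
  finally have "card ?I < 2*m1" using b1 b2 by linarith
  moreover have "N div 2 \<le> card ?I" by (rule parity_count[OF r])
  ultimately show False using N by linarith
qed

lemma pick_sub:
  assumes "finite S" "a \<le> card S"
  shows "\<exists>A. A \<subseteq> S \<and> card A = a \<and> finite A \<and> card (S - A) = card S - a"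
proof -
  obtain A where "A \<subseteq> S" "card A = a" "finite A" using obtain_subset_with_card_n[OF assms(2)] by blast
  thus ?thesis using assms(1) by (metis card_Diff_subset)
qed

lemma seg_facts:
  assumes "s + c < length U"
  shows "take (Suc c) (drop s U) \<noteq> []" "hd (take (Suc c) (drop s U)) = U ! s"
    "last (take (Suc c) (drop s U)) = U ! (s + c)" "length (take (Suc c) (drop s U)) = Suc c"
    "set (take (Suc c) (drop s U)) \<subseteq> set U"
proof -
  have d: "drop s U = U ! s # drop (Suc s) U" using assms by (simp add: Cons_nth_drop_Suc)
  show "take (Suc c) (drop s U) \<noteq> []" "hd (take (Suc c) (drop s U)) = U ! s" using d by simp_all
  show l: "length (take (Suc c) (drop s U)) = Suc c" using assms by simp
  show "last (take (Suc c) (drop s U)) = U ! (s + c)"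
    using assms l by (simp add: last_conv_nth)
  show "set (take (Suc c) (drop s U)) \<subseteq> set U"
    by (meson in_set_dropD in_set_takeD subsetI)
qed

lemma side_const:
  assumes QR: "Q \<inter> R = {}" and noQ: "\<forall>u\<in>Q. \<forall>v\<in>Q. \<not> E u v" and noR: "\<forall>u\<in>R. \<forall>v\<in>R. \<not> E u v"
    and F: "F \<subseteq> Q \<union> R" and ps: "pth E F x u ps" "length ps = Suc j"
  shows "(u \<in> Q) = ((x \<in> Q) = even j)"
proof -
  have "set ps \<subseteq> Q \<union> R" using ps F unfolding pth_def by auto
  hence "(ps ! j \<in> Q) = ((ps ! 0 \<in> Q) = even j)"
    using path_parity[OF _ QR _ noQ noR, of ps j] ps unfolding pth_def by auto
  moreover have "ps ! j = u" using ps unfolding pth_def by (metis diff_Suc_1 last_conv_nth)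
  moreover have "ps ! 0 = x" using ps unfolding pth_def by (metis hd_conv_nth)
  ultimately show ?thesis by simp
qed

lemma blocked_small:
  assumes sym: "\<forall>u v. E u v \<longrightarrow> E v u" and QR: "Q \<inter> R = {}"
    and hQR: "HF E m1 m2 Q R" and hRQ: "HF E m1 m2 R Q"
    and W: "W \<subseteq> Q \<union> R" "finite W"
    and L: "finite L" "m2 \<le> card L" "\<forall>u\<in>L. (u \<in> Q) = \<sigma>" "L \<subseteq> Q \<union> R"
  shows "card {v\<in>W. (v \<in> Q) \<noteq> \<sigma> \<and> (\<forall>u\<in>L. \<not> E u v)} < m1"
proof -
  let ?B = "{v\<in>W. (v \<in> Q) \<noteq> \<sigma> \<and> (\<forall>u\<in>L. \<not> E u v)}"
  have fB: "finite ?B" using W by simp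
  have ne: "\<forall>s\<in>?B. \<forall>z\<in>L. \<not> E s z" using sym by blast
  show ?thesis
  proof (cases \<sigma>)
    case True
    hence "L \<subseteq> Q" using L by blast
    moreover have "?B \<subseteq> R" using W True by blast
    ultimately show ?thesis using hf_bound1[OF hRQ fB _ _ L(1) L(2) ne] by blast
  next
    case False
    hence "L \<subseteq> R" using L QR by blast
    moreover have "?B \<subseteq> Q" using W False by blast
    ultimately show ?thesis using hf_bound1[OF hQR fB _ _ L(1) L(2) ne] by blast
  qed
qed

lemma connect:
  assumes sym: "\<forall>u v. E u v \<longrightarrow> E v u" and QR: "Q \<inter> R = {}"
    and noQ: "\<forall>u\<in>Q. \<forall>v\<in>Q. \<not> E u v" and noR: "\<forall>u\<in>R. \<forall>v\<in>R. \<not> E u v"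
    and hQR: "HF E m1 m2 Q R" and hRQ: "HF E m1 m2 R Q"
    and sub: "W \<subseteq> Q \<union> R" "F1 \<subseteq> Q \<union> R" "F2 \<subseteq> Q \<union> R" and fW: "finite W"
    and dis: "W \<inter> F1 = {}" "W \<inter> F2 = {}" "F1 \<inter> F2 = {}" and p: "p \<notin> W \<union> F1 \<union> F2"
    and U: "distinct U" "set U \<subseteq> W" "successively E U" "4*m1 + m2 \<le> length U"
    and x: "E p x1" "E p x2"
    and par: "((x1 \<in> Q) = (x2 \<in> Q)) = even n"
    and L1: "L1 \<subseteq> F1" "finite L1" "m2 \<le> card L1" "\<forall>u\<in>L1. \<exists>ps. pth E F1 x1 u ps \<and> length ps = Suc j1"
    and L2: "L2 \<subseteq> F2" "finite L2" "m2 \<le> card L2" "\<forall>u\<in>L2. \<exists>ps. pth E F2 x2 u ps \<and> length ps = Suc j2"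
    and nj: "j1 + j2 + 4 \<le> n" "n \<le> m2" and m1: "m1 \<ge> 1" and m2: "m2 \<ge> 1"
  shows "\<exists>cyc. length cyc = n \<and> distinct cyc \<and> set cyc \<subseteq> insert p (W \<union> F1 \<union> F2) \<and>
           successively E cyc \<and> E (last cyc) (hd cyc)"
proof -
  define \<sigma>1 where "\<sigma>1 = ((x1 \<in> Q) = even j1)"
  define \<sigma>2 where "\<sigma>2 = ((x2 \<in> Q) = even j2)"
  have s1: "\<forall>u\<in>L1. (u \<in> Q) = \<sigma>1"
  proof
    fix u assume "u \<in> L1"
    then obtain ps where "pth E F1 x1 u ps" "length ps = Suc j1" using L1 by blast
    thus "(u \<in> Q) = \<sigma>1" using side_const[OF QR noQ noR sub(2)] \<sigma>1_def by blast
  qed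
  have s2: "\<forall>u\<in>L2. (u \<in> Q) = \<sigma>2"
  proof
    fix u assume "u \<in> L2"
    then obtain ps where "pth E F2 x2 u ps" "length ps = Suc j2" using L2 by blast
    thus "(u \<in> Q) = \<sigma>2" using side_const[OF QR noQ noR sub(3)] \<sigma>2_def by blast
  qed
  define Bl1 where "Bl1 = {v\<in>W. (v \<in> Q) \<noteq> \<sigma>1 \<and> (\<forall>u\<in>L1. \<not> E u v)}"
  define Bl2 where "Bl2 = {v\<in>W. (v \<in> Q) \<noteq> \<sigma>2 \<and> (\<forall>u\<in>L2. \<not> E u v)}"
  have b1: "card Bl1 < m1" unfolding Bl1_def
    using blocked_small[OF sym QR hQR hRQ sub(1) fW L1(2) L1(3) s1] L1(1) sub(2) by blast
  have b2: "card Bl2 < m1" unfolding Bl2_def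
    using blocked_small[OF sym QR hQR hRQ sub(1) fW L2(2) L2(3) s2] L2(1) sub(3) by blast
  have fb: "finite Bl1" "finite Bl2" unfolding Bl1_def Bl2_def using fW by simp_all
  define c where "c = n - 4 - j1 - j2"
  have nc: "n = c + j1 + j2 + 4" using nj unfolding c_def by simp
  define N where "N = length U - c"
  have N: "4*m1 \<le> N" "N + c \<le> length U" using U(4) nj unfolding N_def c_def by auto
  define r where "r = (if (U ! 0 \<in> Q) = (\<not> \<sigma>1) then 0 else (1::nat))"
  have r2: "r < 2" unfolding r_def by simp
  obtain s where s: "s < N" "s mod 2 = r" "U ! s \<notin> Bl1" "U ! (s + c) \<notin> Bl2"
    using find_pos[OF U(1) N(2) b1 b2 fb N(1) r2] by blast
  have sc: "s + c < length U" using s N by linarith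
  have lU: "0 < length U" using sc by linarith
  have UQR: "set U \<subseteq> Q \<union> R" using U(2) sub(1) by blast
  have pa: "(U ! s \<in> Q) = ((U ! 0 \<in> Q) = even s)"
    using path_parity[OF UQR QR U(3) noQ noR] sc by simp
  have pb: "(U ! (s+c) \<in> Q) = ((U ! 0 \<in> Q) = even (s+c))"
    using path_parity[OF UQR QR U(3) noQ noR] sc by simp
  have es: "even s = (r = 0)" using s(2) unfolding r_def by (auto split: if_splits)
  have sa: "(U ! s \<in> Q) = (\<not> \<sigma>1)" using pa es unfolding r_def by (auto split: if_splits)
  have en: "even n = (even c = (even j1 = even j2))" using nc by auto
  have sb: "(U ! (s+c) \<in> Q) = (\<not> \<sigma>2)"
    using sa pa pb en par unfolding \<sigma>1_def \<sigma>2_def by auto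
  have inU: "U ! s \<in> W" "U ! (s + c) \<in> W" using sc U(2) by (auto intro: nth_mem)
  obtain u1 where u1: "u1 \<in> L1" "E u1 (U ! s)" using s(3) sa inU unfolding Bl1_def by blast
  obtain u2 where u2: "u2 \<in> L2" "E u2 (U ! (s+c))" using s(4) sb inU unfolding Bl2_def by blast
  obtain ps1 where ps1: "pth E F1 x1 u1 ps1" "length ps1 = Suc j1" using L1(4) u1 by blast
  obtain ps2 where ps2: "pth E F2 x2 u2 ps2" "length ps2 = Suc j2" using L2(4) u2 by blast
  define seg where "seg = take (Suc c) (drop s U)"
  note sf = seg_facts[OF sc, folded seg_def]
  have dseg: "distinct seg" unfolding seg_def using U(1) by simp
  have sseg: "successively E seg" unfolding seg_def using U(3) by (simp add: successively_take successively_drop)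
  define cyc where "cyc = p # ps1 @ seg @ rev ps2"
  have p1: "ps1 \<noteq> []" "hd ps1 = x1" "last ps1 = u1" "distinct ps1" "set ps1 \<subseteq> F1" "successively E ps1"
    using ps1 unfolding pth_def by auto
  have p2: "ps2 \<noteq> []" "hd ps2 = x2" "last ps2 = u2" "distinct ps2" "set ps2 \<subseteq> F2" "successively E ps2"
    using ps2 unfolding pth_def by auto
  have segW: "set seg \<subseteq> W" using sf(5) U(2) by blast
  have "length cyc = n" unfolding cyc_def using ps1 ps2 sf(4) nc by simp
  moreover have "distinct cyc" unfolding cyc_def
    using p1 p2 dseg segW dis p by auto
  moreover have "set cyc \<subseteq> insert p (W \<union> F1 \<union> F2)" unfolding cyc_def using p1 p2 segW by auto
  moreover have "successively E cyc"
  proof -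
    have r2: "successively E (rev ps2)" using p2(6) sym by (simp add: successively_mono[of _ _ E] )
      (metis successively_mono)
    have e1: "E (last ps1) (hd seg)" using p1 u1 sf(2) by simp
    have e2: "E (last seg) (hd (rev ps2))" using sf(3) p2 u2 sym by (simp add: hd_rev)
    have "successively E (ps1 @ seg @ rev ps2)"
      using p1 sseg r2 e1 e2 sf(1) p2(1) by (auto simp: successively_append_iff)
    moreover have "E p (hd (ps1 @ seg @ rev ps2))" using p1 x by simp
    ultimately show ?thesis unfolding cyc_def by (simp add: successively_Cons)
  qed
  moreover have "E (last cyc) (hd cyc)"
    unfolding cyc_def using p2 x sym by (simp add: last_rev)
  ultimately show ?thesis by blast
qed

lemma card_diff_ge: "finite B \<Longrightarrow> card A - card B \<le> card (A - B)"
  by (rule diff_card_le_card_Diff)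

lemma core:
  assumes fP: "finite P" and fQ: "finite Q" and fR: "finite R"
    and dPQ: "P \<inter> Q = {}" and dPR: "P \<inter> R = {}" and QR: "Q \<inter> R = {}"
    and cP: "m1 + m2 - 1 \<le> card P" and cQ: "8*m1 + 19*m2 \<le> card Q" and cR: "8*m1 + 19*m2 \<le> card R"
    and sym: "\<forall>u v. E u v \<longrightarrow> E v u"
    and noQ: "\<forall>u\<in>Q. \<forall>v\<in>Q. \<not> E u v" and noR: "\<forall>u\<in>R. \<forall>v\<in>R. \<not> E u v"
    and m1: "m1 \<ge> 1" and m2: "m2 \<ge> 1" and K: "4*m2 \<le> 2^K" and n: "2*K + 2 \<le> n" "n \<le> m2"
    and hQR: "HF E m1 m2 Q R" and hRQ: "HF E m1 m2 R Q" and hPQ: "HF E m1 m2 P Q" and hRP: "HF E m1 m2 R P"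
  shows "\<exists>cyc. length cyc = n \<and> distinct cyc \<and> set cyc \<subseteq> P \<union> Q \<union> R \<and>
           successively E cyc \<and> E (last cyc) (hd cyc)"
proof -
  obtain P' where P': "P' \<subseteq> Q" "card P' = m1 + m2 - 1" "finite P'" "card (Q - P') = card Q - (m1+m2-1)"
  proof -
    have "m1+m2-1 \<le> card Q" using cQ by linarith
    thus thesis using pick_sub[OF fQ, of "m1+m2-1"] that by blast
  qed
  define Q1 where "Q1 = Q - P'"
  obtain WQ where WQ: "WQ \<subseteq> Q1" "card WQ = 5*m1 + 2*m2" "finite WQ" "card (Q1 - WQ) = card Q1 - (5*m1+2*m2)"
  proof -
    have "5*m1+2*m2 \<le> card Q1" unfolding Q1_def using P'(4) cQ by linarith
    thus thesis using pick_sub[of Q1 "5*m1+2*m2"] fQ that unfolding Q1_def by blast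
  qed
  define Q2 where "Q2 = Q1 - WQ"
  have fQ2: "finite Q2" unfolding Q2_def Q1_def using fQ by simp
  obtain F1Q where F1Q: "F1Q \<subseteq> Q2" "card F1Q = m1 + 8*m2" "finite F1Q" "card (Q2 - F1Q) = card Q2 - (m1+8*m2)"
  proof -
    have "m1+8*m2 \<le> card Q2" unfolding Q2_def using WQ(4) P'(4) cQ unfolding Q1_def by linarith
    thus thesis using pick_sub[OF fQ2, of "m1+8*m2"] that by blast
  qed
  define F2Q where "F2Q = Q2 - F1Q"
  have cF2Q: "m1 + 8*m2 \<le> card F2Q" unfolding F2Q_def using F1Q(4) WQ(4) P'(4) cQ unfolding Q2_def Q1_def by linarith
  obtain WR where WR: "WR \<subseteq> R" "card WR = 5*m1 + 2*m2" "finite WR" "card (R - WR) = card R - (5*m1+2*m2)"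
  proof -
    have "5*m1+2*m2 \<le> card R" using cR by linarith
    thus thesis using pick_sub[OF fR, of "5*m1+2*m2"] that by blast
  qed
  define R1 where "R1 = R - WR"
  have fR1: "finite R1" unfolding R1_def using fR by simp
  obtain F1R where F1R: "F1R \<subseteq> R1" "card F1R = m1 + 8*m2" "finite F1R" "card (R1 - F1R) = card R1 - (m1+8*m2)"
  proof -
    have "m1+8*m2 \<le> card R1" unfolding R1_def using WR(4) cR by linarith
    thus thesis using pick_sub[OF fR1, of "m1+8*m2"] that by blast
  qed
  define F2R where "F2R = R1 - F1R"
  have cF2R: "m1 + 8*m2 \<le> card F2R" unfolding F2R_def using F1R(4) WR(4) cR unfolding R1_def by linarith
  have fF2Q: "finite F2Q" unfolding F2Q_def using fQ2 by simp
  have fF2R: "finite F2R" unfolding F2R_def using fR1 by simp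
  have locQ: "WQ \<subseteq> Q" "F1Q \<subseteq> Q" "F2Q \<subseteq> Q" "P' \<inter> WQ = {}" "P' \<inter> F1Q = {}" "P' \<inter> F2Q = {}"
    "WQ \<inter> F1Q = {}" "WQ \<inter> F2Q = {}" "F1Q \<inter> F2Q = {}"
    using P'(1) WQ(1) F1Q(1) unfolding F2Q_def Q2_def Q1_def by auto
  have locR: "WR \<subseteq> R" "F1R \<subseteq> R" "F2R \<subseteq> R" "WR \<inter> F1R = {}" "WR \<inter> F2R = {}" "F1R \<inter> F2R = {}"
    using WR(1) F1R(1) unfolding F2R_def R1_def by auto
  have hW1: "HF E m1 m2 WR WQ" using HF_mono[OF hRQ locR(1) locQ(1)] .
  have hW2: "HF E m1 m2 WQ WR" using HF_mono[OF hQR locQ(1) locR(1)] .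
  have dW: "WQ \<inter> WR = {}" using locQ(1) locR(1) QR by blast
  obtain U where U: "distinct U" "set U \<subseteq> WQ \<union> WR" "successively E U"
      "min (card WQ) (card WR) + 2 \<le> length U + m1 + m2"
  proof -
    have "2*m2 \<le> card WQ" using WQ(2) by simp
    from long_path[OF WQ(3) WR(3) dW sym hW1 hW2 m1 m2 this] show thesis using that by blast
  qed
  have lU: "4*m1 + m2 \<le> length U" using U(4) WQ(2) WR(2) by simp
  have d1: "F1Q \<inter> F1R = {}" using locQ(2) locR(2) QR by blast
  have d2: "F2Q \<inter> F2R = {}" using locQ(3) locR(3) QR by blast
  obtain B1 where B1: "B1 \<subseteq> F1Q \<union> F1R" "card B1 < 2*m2"
      "\<forall>S. S \<subseteq> (F1Q \<union> F1R) - B1 \<longrightarrow> S \<noteq> {} \<longrightarrow> card S < 2*m2 \<longrightarrow>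
          card S < card (nbr E ((F1Q \<union> F1R) - B1) S)"
  proof -
    have "m1 + 8*m2 \<le> card F1Q" "m1 + 8*m2 \<le> card F1R" using F1Q(2) F1R(2) by simp_all
    from expand_core[OF F1Q(3) F1R(3) d1 sym HF_mono[OF hRQ locR(2) locQ(2)] HF_mono[OF hQR locQ(2) locR(2)]
        this m2] show thesis using that by blast
  qed
  obtain B2 where B2: "B2 \<subseteq> F2Q \<union> F2R" "card B2 < 2*m2"
      "\<forall>S. S \<subseteq> (F2Q \<union> F2R) - B2 \<longrightarrow> S \<noteq> {} \<longrightarrow> card S < 2*m2 \<longrightarrow>
          card S < card (nbr E ((F2Q \<union> F2R) - B2) S)"
    using expand_core[OF fF2Q fF2R d2 sym HF_mono[OF hRQ locR(3) locQ(3)] HF_mono[OF hQR locQ(3) locR(3)]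
        cF2Q cF2R m2] by blast
  define Y1 where "Y1 = (F1Q \<union> F1R) - B1"
  define Y2 where "Y2 = (F2Q \<union> F2R) - B2"
  have fY1: "finite Y1" unfolding Y1_def using F1Q(3) F1R(3) by simp
  have fY2: "finite Y2" unfolding Y2_def using fF2Q fF2R by simp
  have fB1: "finite B1" using B1(1) F1Q(3) F1R(3) finite_subset by blast
  have fB2: "finite B2" using B2(1) fF2Q fF2R finite_subset by blast
  have cz1: "m1 + 6*m2 \<le> card (F1Q - B1)" "m1 + 6*m2 \<le> card (F1R - B1)"
    using card_diff_ge[OF fB1, of F1Q] card_diff_ge[OF fB1, of F1R] B1(2) F1Q(2) F1R(2) by linarith+
  have cz2: "m1 + 6*m2 \<le> card (F2R - B2)"
    using card_diff_ge[OF fB2, of F2R] B2(2) cF2R by linarith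
  have z1: "F1Q - B1 \<subseteq> Y1" "F1R - B1 \<subseteq> Y1" "F2R - B2 \<subseteq> Y2" unfolding Y1_def Y2_def by auto
  have "\<exists>p x1 x2. (p \<in> P \<or> p \<in> P') \<and> x1 \<in> Y1 \<and> x2 \<in> Y2 \<and> E p x1 \<and> E p x2 \<and>
          ((x1 \<in> Q) = (x2 \<in> Q)) = even n"
  proof (cases "even n")
    case False
    have a1: "card {p\<in>P. \<not> (\<exists>y\<in>F1Q - B1. E p y)} < m1"
      by (rule hf_bound1[OF hPQ, where Z="F1Q - B1"]) (use fP F1Q(3) locQ(2) cz1 in auto)
    have a2: "card {p\<in>P. \<not> (\<exists>y\<in>F2R - B2. E p y)} < m2"
    proof -
      have "\<forall>z\<in>F2R - B2. \<forall>s\<in>{p\<in>P. \<not> (\<exists>y\<in>F2R - B2. E p y)}. \<not> E z s" (is ?ne) using sym by blast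
      show ?thesis by (rule hf_bound2[OF hRP _ _ _ _ _ \<open>?ne\<close>]) (use fP fF2R locR(3) cz2 in auto)
    qed
    obtain p where pP: "p \<in> P" and "\<exists>y\<in>F1Q - B1. E p y" "\<exists>y\<in>F2R - B2. E p y"
      using pigeon2[OF fP cP a1 a2] by blast
    then obtain x1 x2 where xx: "x1 \<in> F1Q - B1" "x2 \<in> F2R - B2" "E p x1" "E p x2" by blast
    moreover have "x1 \<in> Q" "x2 \<notin> Q" using xx locQ(2) locR(3) QR by blast+
    ultimately show ?thesis using z1 False pP by (intro exI[of _ p] exI[of _ x1] exI[of _ x2]) auto
  next
    case True
    have a1: "card {p\<in>P'. \<not> (\<exists>y\<in>F1R - B1. E p y)} < m1"
      by (rule hf_bound1[OF hQR, where Z="F1R - B1"]) (use P'(1,3) F1R(3) locR(2) cz1 in auto)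
    have a2: "card {p\<in>P'. \<not> (\<exists>y\<in>F2R - B2. E p y)} < m2"
    proof -
      have "\<forall>z\<in>F2R - B2. \<forall>s\<in>{p\<in>P'. \<not> (\<exists>y\<in>F2R - B2. E p y)}. \<not> E z s" (is ?ne) using sym by blast
      show ?thesis by (rule hf_bound2[OF hRQ _ _ _ _ _ \<open>?ne\<close>]) (use P'(1,3) fF2R locR(3) cz2 in auto)
    qed
    have cP': "m1 + m2 - 1 \<le> card P'" using P'(2) by simp
    obtain p where pP: "p \<in> P'" and "\<exists>y\<in>F1R - B1. E p y" "\<exists>y\<in>F2R - B2. E p y"
      using pigeon2[OF P'(3) cP' a1 a2] by blast
    then obtain x1 x2 where xx: "x1 \<in> F1R - B1" "x2 \<in> F2R - B2" "E p x1" "E p x2" by blast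
    moreover have "x1 \<notin> Q" "x2 \<notin> Q" using xx locR(2,3) QR by blast+
    ultimately show ?thesis using z1 True pP by (intro exI[of _ p] exI[of _ x1] exI[of _ x2]) auto
  qed
  then obtain p x1 x2 where pj: "p \<in> P \<or> p \<in> P'" "x1 \<in> Y1" "x2 \<in> Y2" "E p x1" "E p x2"
    "((x1 \<in> Q) = (x2 \<in> Q)) = even n" by blast
  obtain j1 L1 where L1: "2^j1 \<le> 2*m2" "L1 \<subseteq> Y1" "m2 \<le> card L1" "finite L1"
      "\<forall>u\<in>L1. \<exists>ps. pth E Y1 x1 u ps \<and> length ps = Suc j1"
    using bfs_sphere[OF fY1 pj(2) m2] B1(3) unfolding Y1_def by blast
  obtain j2 L2 where L2: "2^j2 \<le> 2*m2" "L2 \<subseteq> Y2" "m2 \<le> card L2" "finite L2"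
      "\<forall>u\<in>L2. \<exists>ps. pth E Y2 x2 u ps \<and> length ps = Suc j2"
    using bfs_sphere[OF fY2 pj(3) m2] B2(3) unfolding Y2_def by blast
  have "(2::nat)^(Suc j1) \<le> 2^K" using L1(1) K by simp
  hence k1: "Suc j1 \<le> K" by (rule power_le_imp_le_exp[rotated]) simp
  have "(2::nat)^(Suc j2) \<le> 2^K" using L2(1) K by simp
  hence k2: "Suc j2 \<le> K" by (rule power_le_imp_le_exp[rotated]) simp
  have nj: "j1 + j2 + 4 \<le> n" using k1 k2 n by linarith
  let ?W = "WQ \<union> WR"
  have sub: "?W \<subseteq> Q \<union> R" "Y1 \<subseteq> Q \<union> R" "Y2 \<subseteq> Q \<union> R"
    unfolding Y1_def Y2_def using locQ locR by auto
  have fW: "finite ?W" using WQ(3) WR(3) by simp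
  have dis: "?W \<inter> Y1 = {}" "?W \<inter> Y2 = {}" "Y1 \<inter> Y2 = {}"
    unfolding Y1_def Y2_def using locQ locR QR by auto
  have pn: "p \<notin> ?W \<union> Y1 \<union> Y2"
    using pj(1) P'(1) locQ locR QR dPQ dPR unfolding Y1_def Y2_def by auto
  obtain cyc where cyc: "length cyc = n" "distinct cyc" "set cyc \<subseteq> insert p (?W \<union> Y1 \<union> Y2)"
      "successively E cyc" "E (last cyc) (hd cyc)"
    using connect[OF sym QR noQ noR hQR hRQ sub fW dis pn U(1,2,3) lU pj(4,5,6) L1(2,4,3,5) L2(2,4,3,5) nj n(2) m1 m2]
    by blast
  have "insert p (?W \<union> Y1 \<union> Y2) \<subseteq> P \<union> Q \<union> R" using pj(1) sub P'(1) by auto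
  thus ?thesis using cyc by blast
qed


lemma f_ge: "33*x + 49*y \<le> f_seq (Suc t) x y"
proof (induction t arbitrary: x y)
  case 0 thus ?case by simp
next
  case (Suc t)
  let ?a = "32*x + 49*y"
  have "33 * f_seq (Suc t) ?a (x + y - 1) + 49 * ?a \<le> f_seq (Suc t) (f_seq (Suc t) ?a (x + y - 1)) ?a"
    by (rule Suc.IH)
  thus ?case by simp
qed

lemma not_HF_hole:
  assumes "\<not> HF E m1 m2 A B"
  shows "\<exists>X Y. X \<subseteq> A \<and> Y \<subseteq> B \<and> card X = m1 \<and> card Y = m2 \<and> finite X \<and> finite Y \<and>
     (\<forall>x\<in>X. \<forall>y\<in>Y. \<not> E x y)"
proof -
  obtain X Y where XY: "X \<subseteq> A" "Y \<subseteq> B" "finite X" "finite Y" "m1 \<le> card X" "m2 \<le> card Y"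
     "\<not> joined E X Y" using assms unfolding HF_def by blast
  obtain X' where X': "X' \<subseteq> X" "card X' = m1" "finite X'" using obtain_subset_with_card_n[OF XY(5)] by blast
  obtain Y' where Y': "Y' \<subseteq> Y" "card Y' = m2" "finite Y'" using obtain_subset_with_card_n[OF XY(6)] by blast
  have "\<forall>x\<in>X'. \<forall>y\<in>Y'. \<not> E x y" using XY(7) X'(1) Y'(1) unfolding joined_def by blast
  thus ?thesis using X' Y' XY(1,2) by (intro exI[of _ X'] exI[of _ Y']) auto
qed

lemma core_alt:
  fixes E :: "nat \<Rightarrow> nat \<Rightarrow> bool" and P Q R :: "nat set"
  assumes fP: "finite P" and fQ: "finite Q" and fR: "finite R"
    and dPQ: "P \<inter> Q = {}" and dPR: "P \<inter> R = {}" and QR: "Q \<inter> R = {}"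
    and cP: "m1 + m2 - 1 \<le> card P" and cQ: "8*m1 + 19*m2 \<le> card Q" and cR: "8*m1 + 19*m2 \<le> card R"
    and sym: "\<forall>u v. E u v \<longrightarrow> E v u"
    and noQ: "\<forall>u\<in>Q. \<forall>v\<in>Q. \<not> E u v" and noR: "\<forall>u\<in>R. \<forall>v\<in>R. \<not> E u v"
    and m1: "m1 \<ge> 1" and m2: "m2 \<ge> 1" and K: "4*m2 \<le> 2^K" and n: "2*K + 2 \<le> n" "n \<le> m2"
  shows "(\<exists>cyc. length cyc = n \<and> distinct cyc \<and> set cyc \<subseteq> P \<union> Q \<union> R \<and>
           successively E cyc \<and> E (last cyc) (hd cyc)) \<or>
         (\<exists>X Y. card X = m1 \<and> card Y = m2 \<and> finite X \<and> finite Y \<and> (\<forall>x\<in>X. \<forall>y\<in>Y. \<not> E x y) \<and>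
            ((X \<subseteq> Q \<and> Y \<subseteq> R) \<or> (X \<subseteq> R \<and> Y \<subseteq> Q) \<or> (X \<subseteq> P \<and> Y \<subseteq> Q) \<or> (X \<subseteq> R \<and> Y \<subseteq> P)))"
proof (cases "HF E m1 m2 Q R \<and> HF E m1 m2 R Q \<and> HF E m1 m2 P Q \<and> HF E m1 m2 R P")
  case True
  thus ?thesis using core[OF fP fQ fR dPQ dPR QR cP cQ cR sym noQ noR m1 m2 K n] by blast
next
  case False
  then consider "\<not> HF E m1 m2 Q R" | "\<not> HF E m1 m2 R Q" | "\<not> HF E m1 m2 P Q" | "\<not> HF E m1 m2 R P" by blast
  thus ?thesis
  proof cases
    case 1 from not_HF_hole[OF this] show ?thesis by blast
  next
    case 2 from not_HF_hole[OF this] show ?thesis by blast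
  next
    case 3 from not_HF_hole[OF this] show ?thesis by blast
  next
    case 4 from not_HF_hole[OF this] show ?thesis by blast
  qed
qed


definition cyc_col :: "(nat \<Rightarrow> nat \<Rightarrow> nat) \<Rightarrow> nat \<Rightarrow> nat \<Rightarrow> nat set \<Rightarrow> bool" where
  "cyc_col c col n V \<longleftrightarrow> (\<exists>cyc. length cyc = n \<and> distinct cyc \<and> set cyc \<subseteq> V \<and>
      successively (\<lambda>u v. c u v = col) cyc \<and> c (last cyc) (hd cyc) = col)"

definition hole_col :: "(nat \<Rightarrow> nat \<Rightarrow> nat) \<Rightarrow> nat \<Rightarrow> nat \<Rightarrow> nat \<Rightarrow> nat set \<Rightarrow> bool" where
  "hole_col c t m1 m2 V \<longleftrightarrow> (\<exists>X Y. X \<subseteq> V \<and> Y \<subseteq> V \<and> X \<inter> Y = {} \<and> card X = m1 \<and> card Y = m2 \<and>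
      finite X \<and> finite Y \<and> (\<forall>x\<in>X. \<forall>y\<in>Y. c x y \<notin> {1..t}))"

definition cross :: "nat set \<Rightarrow> nat set \<Rightarrow> nat set \<Rightarrow> nat \<Rightarrow> nat \<Rightarrow> bool" where
  "cross P Q R u v \<longleftrightarrow> (u \<in> Q \<and> v \<in> R) \<or> (u \<in> R \<and> v \<in> Q) \<or> (u \<in> P \<and> (v \<in> Q \<or> v \<in> R)) \<or>
     ((u \<in> Q \<or> u \<in> R) \<and> v \<in> P)"

lemma tri_step:
  assumes fP: "finite P" and fQ: "finite Q" and fR: "finite R"
    and dPQ: "P \<inter> Q = {}" and dPR: "P \<inter> R = {}" and QR: "Q \<inter> R = {}"
    and sub: "P \<subseteq> V" "Q \<subseteq> V" "R \<subseteq> V"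
    and cP: "m1 + m2 - 1 \<le> card P" and cQ: "8*m1 + 19*m2 \<le> card Q" and cR: "8*m1 + 19*m2 \<le> card R"
    and csym: "\<forall>x\<in>V. \<forall>y\<in>V. x \<noteq> y \<longrightarrow> c x y = c y x"
    and old: "\<forall>u v. cross P Q R u v \<longrightarrow> c u v \<notin> {1..s}"
    and m1: "m1 \<ge> 1" and m2: "m2 \<ge> 1" and K: "4*m2 \<le> 2^K" and n: "2*K + 2 \<le> n" "n \<le> m2"
  shows "cyc_col c (Suc s) n V \<or> hole_col c (Suc s) m1 m2 V"
proof -
  define E where "E = (\<lambda>u v. c u v = Suc s \<and> cross P Q R u v)"
  have cr_sym: "\<And>u v. cross P Q R u v \<Longrightarrow> cross P Q R v u" unfolding cross_def by blast
  have cr_ne: "\<And>u v. cross P Q R u v \<Longrightarrow> u \<noteq> v" unfolding cross_def using dPQ dPR QR by blast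
  have cr_V: "\<And>u v. cross P Q R u v \<Longrightarrow> u \<in> V \<and> v \<in> V" unfolding cross_def using sub by blast
  have sym: "\<forall>u v. E u v \<longrightarrow> E v u"
  proof (intro allI impI)
    fix u v assume "E u v"
    hence "c u v = Suc s" "cross P Q R u v" unfolding E_def by auto
    moreover have "c u v = c v u" using csym cr_V[OF calculation(2)] cr_ne[OF calculation(2)] by blast
    ultimately show "E v u" unfolding E_def using cr_sym by simp
  qed
  have noQ: "\<forall>u\<in>Q. \<forall>v\<in>Q. \<not> E u v" unfolding E_def cross_def using dPQ QR by blast
  have noR: "\<forall>u\<in>R. \<forall>v\<in>R. \<not> E u v" unfolding E_def cross_def using dPR QR by blast
  from core_alt[OF fP fQ fR dPQ dPR QR cP cQ cR sym noQ noR m1 m2 K n]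
  show ?thesis
  proof
    assume "\<exists>cyc. length cyc = n \<and> distinct cyc \<and> set cyc \<subseteq> P \<union> Q \<union> R \<and>
           successively E cyc \<and> E (last cyc) (hd cyc)"
    then obtain cyc where cy: "length cyc = n" "distinct cyc" "set cyc \<subseteq> P \<union> Q \<union> R"
           "successively E cyc" "E (last cyc) (hd cyc)" by blast
    have "successively (\<lambda>u v. c u v = Suc s) cyc"
      using cy(4) by (rule successively_mono) (simp add: E_def)
    moreover have "c (last cyc) (hd cyc) = Suc s" using cy(5) unfolding E_def by simp
    moreover have "set cyc \<subseteq> V" using cy(3) sub by blast
    ultimately show ?thesis unfolding cyc_col_def using cy(1,2) by blast
  next
    assume "\<exists>X Y. card X = m1 \<and> card Y = m2 \<and> finite X \<and> finite Y \<and> (\<forall>x\<in>X. \<forall>y\<in>Y. \<not> E x y) \<and>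
            ((X \<subseteq> Q \<and> Y \<subseteq> R) \<or> (X \<subseteq> R \<and> Y \<subseteq> Q) \<or> (X \<subseteq> P \<and> Y \<subseteq> Q) \<or> (X \<subseteq> R \<and> Y \<subseteq> P))"
    then obtain X Y where XY: "card X = m1" "card Y = m2" "finite X" "finite Y" "\<forall>x\<in>X. \<forall>y\<in>Y. \<not> E x y"
      and ori: "(X \<subseteq> Q \<and> Y \<subseteq> R) \<or> (X \<subseteq> R \<and> Y \<subseteq> Q) \<or> (X \<subseteq> P \<and> Y \<subseteq> Q) \<or> (X \<subseteq> R \<and> Y \<subseteq> P)"
      by blast
    have crXY: "\<forall>x\<in>X. \<forall>y\<in>Y. cross P Q R x y" using ori unfolding cross_def by blast
    have "\<forall>x\<in>X. \<forall>y\<in>Y. c x y \<notin> {1..Suc s}"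
    proof (intro ballI)
      fix x y assume "x \<in> X" "y \<in> Y"
      hence "cross P Q R x y" "\<not> E x y" using crXY XY(5) by auto
      hence "c x y \<notin> {1..s}" "c x y \<noteq> Suc s" using old unfolding E_def by auto
      thus "c x y \<notin> {1..Suc s}" by auto
    qed
    moreover have "X \<inter> Y = {}" "X \<subseteq> V" "Y \<subseteq> V" using ori dPQ dPR QR sub by blast+
    ultimately show ?thesis unfolding hole_col_def using XY by blast
  qed
qed


definition claim :: "nat \<Rightarrow> bool" where
  "claim t \<longleftrightarrow> (\<forall>m1 m2 ns V c K. 1 \<le> m1 \<longrightarrow> 1 \<le> m2 \<longrightarrow> length ns = t \<longrightarrow>
     (\<forall>i<t. 2*K+2 \<le> ns!i \<and> ns!i \<le> m2) \<longrightarrow> f_seq t m1 m2 \<le> 2^K \<longrightarrow> finite V \<longrightarrow>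
     f_seq t m1 m2 \<le> card V \<longrightarrow> (\<forall>x\<in>V. \<forall>y\<in>V. x \<noteq> y \<longrightarrow> c x y = c y x) \<longrightarrow>
     (\<exists>i<t. cyc_col c (Suc i) (ns!i) V) \<or> hole_col c t m1 m2 V)"

lemma claimD:
  assumes "claim t" "1 \<le> m1" "1 \<le> m2" "length ns = t" "\<forall>i<t. 2*K+2 \<le> ns!i \<and> ns!i \<le> m2"
    "f_seq t m1 m2 \<le> 2^K" "finite V" "f_seq t m1 m2 \<le> card V" "\<forall>x\<in>V. \<forall>y\<in>V. x \<noteq> y \<longrightarrow> c x y = c y x"
  shows "(\<exists>i<t. cyc_col c (Suc i) (ns!i) V) \<or> hole_col c t m1 m2 V"
  using assms unfolding claim_def by blast

lemma cyc_col_mono: "cyc_col c col n X \<Longrightarrow> X \<subseteq> V \<Longrightarrow> cyc_col c col n V"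
  unfolding cyc_col_def by blast

lemma claim_base: "claim (Suc 0)"
  unfolding claim_def
proof (intro allI impI)
  fix m1 m2 :: nat and ns :: "nat list" and V :: "nat set" and c :: "nat \<Rightarrow> nat \<Rightarrow> nat" and K :: nat
  assume m1: "1 \<le> m1" and m2: "1 \<le> m2" and ln: "length ns = Suc 0"
    and nsb: "\<forall>i<Suc 0. 2*K+2 \<le> ns!i \<and> ns!i \<le> m2" and fK: "f_seq (Suc 0) m1 m2 \<le> 2^K"
    and fV: "finite V" and cV: "f_seq (Suc 0) m1 m2 \<le> card V"
    and csym: "\<forall>x\<in>V. \<forall>y\<in>V. x \<noteq> y \<longrightarrow> c x y = c y x"
  have cV': "33*m1 + 49*m2 \<le> card V" using cV by simp
  obtain P where P: "P \<subseteq> V" "card P = m1 + m2 - 1" "finite P" "card (V - P) = card V - (m1+m2-1)"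
  proof -
    have "m1+m2-1 \<le> card V" using cV' by linarith
    thus thesis using pick_sub[OF fV, of "m1+m2-1"] that by blast
  qed
  have fV1: "finite (V - P)" using fV by simp
  obtain Q where Q: "Q \<subseteq> V - P" "card Q = 8*m1 + 19*m2" "finite Q" "card (V - P - Q) = card (V - P) - (8*m1+19*m2)"
  proof -
    have "8*m1+19*m2 \<le> card (V - P)" using cV' P(4) by linarith
    thus thesis using pick_sub[OF fV1, of "8*m1+19*m2"] that by blast
  qed
  have fV2: "finite (V - P - Q)" using fV by simp
  obtain R where R: "R \<subseteq> V - P - Q" "card R = 8*m1 + 19*m2" "finite R"
  proof -
    have "8*m1+19*m2 \<le> card (V - P - Q)" using cV' P(4) Q(4) by linarith
    thus thesis using pick_sub[OF fV2, of "8*m1+19*m2"] that by blast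
  qed
  have d: "P \<inter> Q = {}" "P \<inter> R = {}" "Q \<inter> R = {}" using Q(1) R(1) by auto
  have sub: "P \<subseteq> V" "Q \<subseteq> V" "R \<subseteq> V" using P(1) Q(1) R(1) by auto
  have old: "\<forall>u v. cross P Q R u v \<longrightarrow> c u v \<notin> {1..0}" by simp
  have K: "4*m2 \<le> 2^K" using fK by simp
  have n: "2*K+2 \<le> ns!0" "ns!0 \<le> m2" using nsb by auto
  have "cyc_col c (Suc 0) (ns!0) V \<or> hole_col c (Suc 0) m1 m2 V"
    using tri_step[OF P(3) Q(3) R(3) d sub _ _ _ csym old m1 m2 K n] P(2) Q(2) R(2) by simp
  thus "(\<exists>i<Suc 0. cyc_col c (Suc i) (ns!i) V) \<or> hole_col c (Suc 0) m1 m2 V" by auto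
qed

lemma claim_step:
  assumes IH: "claim (Suc t)"
  shows "claim (Suc (Suc t))"
  unfolding claim_def
proof (intro allI impI)
  fix m1 m2 :: nat and ns :: "nat list" and V :: "nat set" and c :: "nat \<Rightarrow> nat \<Rightarrow> nat" and K :: nat
  assume m1: "1 \<le> m1" and m2: "1 \<le> m2" and ln: "length ns = Suc (Suc t)"
    and nsb: "\<forall>i<Suc (Suc t). 2*K+2 \<le> ns!i \<and> ns!i \<le> m2" and fK: "f_seq (Suc (Suc t)) m1 m2 \<le> 2^K"
    and fV: "finite V" and cV: "f_seq (Suc (Suc t)) m1 m2 \<le> card V"
    and csym: "\<forall>x\<in>V. \<forall>y\<in>V. x \<noteq> y \<longrightarrow> c x y = c y x"
  define a where "a = 32*m1 + 49*m2"
  define b where "b = m1 + m2 - 1"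
  define Xs where "Xs = f_seq (Suc t) a b"
  have fE: "f_seq (Suc (Suc t)) m1 m2 = f_seq (Suc t) Xs a" unfolding Xs_def a_def b_def by simp
  define ns' where "ns' = take (Suc t) ns"
  have ln': "length ns' = Suc t" unfolding ns'_def using ln by simp
  have nth': "\<And>i. i < Suc t \<Longrightarrow> ns' ! i = ns ! i" unfolding ns'_def by simp
  have a1: "1 \<le> a" unfolding a_def using m1 by simp
  have b1: "1 \<le> b" unfolding b_def using m1 m2 by simp
  have ge: "33*Xs + 49*a \<le> f_seq (Suc t) Xs a" by (rule f_ge)
  have X1: "1 \<le> Xs" unfolding Xs_def using f_ge[of a b t] a1 by linarith
  have nsx: "\<forall>i<Suc t. 2*K+2 \<le> ns'!i \<and> ns'!i \<le> m2"
  proof (intro allI impI)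
    fix i assume i: "i < Suc t"
    hence "i < Suc (Suc t)" by simp
    thus "2*K+2 \<le> ns'!i \<and> ns'!i \<le> m2" using nsb nth'[OF i] by simp
  qed
  have "m2 \<le> a" "m2 \<le> b" unfolding a_def b_def using m1 by simp_all
  hence nsa: "\<forall>i<Suc t. 2*K+2 \<le> ns'!i \<and> ns'!i \<le> a" and nsbb: "\<forall>i<Suc t. 2*K+2 \<le> ns'!i \<and> ns'!i \<le> b"
    using nsx by (meson le_trans)+
  have "(\<exists>i<Suc t. cyc_col c (Suc i) (ns'!i) V) \<or> hole_col c (Suc t) Xs a V"
  proof -
    have "f_seq (Suc t) Xs a \<le> 2^K" "f_seq (Suc t) Xs a \<le> card V" using fK cV fE by simp_all
    thus ?thesis using claimD[OF IH X1 a1 ln' nsa _ fV _ csym] by blast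
  qed
  thus "(\<exists>i<Suc (Suc t). cyc_col c (Suc i) (ns!i) V) \<or> hole_col c (Suc (Suc t)) m1 m2 V"
  proof
    assume "\<exists>i<Suc t. cyc_col c (Suc i) (ns'!i) V"
    then obtain i where "i < Suc t" "cyc_col c (Suc i) (ns'!i) V" by blast
    thus ?thesis using nth' by (intro disjI1 exI[of _ i]) auto
  next
    assume "hole_col c (Suc t) Xs a V"
    then obtain X Y where XY: "X \<subseteq> V" "Y \<subseteq> V" "X \<inter> Y = {}" "card X = Xs" "card Y = a" "finite X" "finite Y"
      "\<forall>x\<in>X. \<forall>y\<in>Y. c x y \<notin> {1..Suc t}" unfolding hole_col_def by blast
    have csX: "\<forall>x\<in>X. \<forall>y\<in>X. x \<noteq> y \<longrightarrow> c x y = c y x" using csym XY(1) by blast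
    have fXK: "f_seq (Suc t) a b \<le> 2^K" using ge fK fE unfolding Xs_def by linarith
    have "(\<exists>i<Suc t. cyc_col c (Suc i) (ns'!i) X) \<or> hole_col c (Suc t) a b X"
    proof -
      have "f_seq (Suc t) a b \<le> card X" using XY(4) unfolding Xs_def by simp
      thus ?thesis using claimD[OF IH a1 b1 ln' nsbb fXK XY(6) _ csX] by blast
    qed
    thus ?thesis
    proof
      assume "\<exists>i<Suc t. cyc_col c (Suc i) (ns'!i) X"
      then obtain i where "i < Suc t" "cyc_col c (Suc i) (ns'!i) X" by blast
      thus ?thesis using nth' cyc_col_mono[OF _ XY(1)] by (intro disjI1 exI[of _ i]) auto
    next
      assume "hole_col c (Suc t) a b X"
      then obtain X1 Y1 where H: "X1 \<subseteq> X" "Y1 \<subseteq> X" "X1 \<inter> Y1 = {}" "card X1 = a" "card Y1 = b"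
        "finite X1" "finite Y1" "\<forall>x\<in>X1. \<forall>y\<in>Y1. c x y \<notin> {1..Suc t}" unfolding hole_col_def by blast
      have d: "Y1 \<inter> X1 = {}" "Y1 \<inter> Y = {}" "X1 \<inter> Y = {}" using H(1-3) XY(3) by auto
      have sub: "Y1 \<subseteq> V" "X1 \<subseteq> V" "Y \<subseteq> V" using H(1,2) XY(1,2) by auto
      have old: "\<forall>u v. cross Y1 X1 Y u v \<longrightarrow> c u v \<notin> {1..Suc t}"
      proof (intro allI impI)
        fix u v assume cr: "cross Y1 X1 Y u v"
        have uv: "u \<noteq> v" "u \<in> V" "v \<in> V" using cr d sub unfolding cross_def by blast+
        have "(u \<in> X \<and> v \<in> Y) \<or> (v \<in> X \<and> u \<in> Y) \<or> (u \<in> X1 \<and> v \<in> Y1) \<or> (v \<in> X1 \<and> u \<in> Y1)"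
          using cr H(1,2) unfolding cross_def by blast
        moreover have "c u v = c v u" using csym uv by blast
        ultimately show "c u v \<notin> {1..Suc t}" using XY(8) H(8) by metis
      qed
      have cP: "m1 + m2 - 1 \<le> card Y1" using H(5) unfolding b_def by simp
      have cQ: "8*m1 + 19*m2 \<le> card X1" using H(4) unfolding a_def by simp
      have cR: "8*m1 + 19*m2 \<le> card Y" using XY(5) unfolding a_def by simp
      have K: "4*m2 \<le> 2^K" using f_ge[of m1 m2 "Suc t"] fK by linarith
      have n: "2*K+2 \<le> ns ! Suc t" "ns ! Suc t \<le> m2" using nsb by auto
      have "cyc_col c (Suc (Suc t)) (ns ! Suc t) V \<or> hole_col c (Suc (Suc t)) m1 m2 V"
        by (rule tri_step[OF H(7) H(6) XY(7) d sub cP cQ cR csym old m1 m2 K n])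
      thus ?thesis by auto
    qed
  qed
qed

lemma claim_all: "claim (Suc t)"
  by (induction t) (auto intro: claim_base claim_step)


lemma cycle_copy:
  assumes n: "2 \<le> n" and cy: "length cyc = n" "distinct cyc" "set cyc \<subseteq> {..<N}"
    "successively (\<lambda>u v. c u v = col) cyc" "c (last cyc) (hd cyc) = col"
    and csym: "\<forall>x y. x < N \<longrightarrow> y < N \<longrightarrow> x \<noteq> y \<longrightarrow> c x y = c y x"
  shows "has_mono_copy N c col (cycle_graph n)"
proof -
  have ne: "cyc \<noteq> []" using cy(1) n by auto
  have e: "\<And>j. j < n \<Longrightarrow> c (cyc ! j) (cyc ! ((j+1) mod n)) = col"
  proof -
    fix j assume j: "j < n"
    show "c (cyc ! j) (cyc ! ((j+1) mod n)) = col"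
    proof (cases "Suc j < n")
      case True
      thus ?thesis using successively_nth[OF cy(4)] cy(1) by simp
    next
      case False
      hence sj: "Suc j = n" using j by simp
      hence jn: "j = n - 1" "(j+1) mod n = 0" by auto
      have "cyc ! j = last cyc" using jn(1) cy(1) ne by (simp add: last_conv_nth)
      moreover have "cyc ! 0 = hd cyc" using ne by (simp add: hd_conv_nth)
      ultimately show ?thesis using cy(5) jn(2) by simp
    qed
  qed
  have ne2: "\<And>j. j < n \<Longrightarrow> cyc ! j \<noteq> cyc ! ((j+1) mod n)"
  proof -
    fix j assume j: "j < n"
    have "j \<noteq> (j+1) mod n"
    proof (cases "Suc j < n")
      case True thus ?thesis by simp
    next
      case False hence "Suc j = n" using j by simp
      thus ?thesis using n by auto
    qed
    moreover have "(j+1) mod n < n" using n by simp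
    ultimately show "cyc ! j \<noteq> cyc ! ((j+1) mod n)" using cy(1,2) j by (simp add: nth_eq_iff_index_eq)
  qed
  have inN: "\<And>j. j < n \<Longrightarrow> cyc ! j < N" using cy(1,3) by (metis lessThan_iff nth_mem subsetD)
  show ?thesis unfolding has_mono_copy_def cycle_graph_def
  proof (intro exI[of _ "\<lambda>j. cyc ! j"] conjI allI impI)
    show "inj_on (\<lambda>j. cyc ! j) (fst ({0..<n}, {{j, (j + 1) mod n} |j. j < n}))"
      using cy(1,2) by (auto simp: inj_on_def nth_eq_iff_index_eq)
    show "(\<lambda>j. cyc ! j) ` fst ({0..<n}, {{j, (j + 1) mod n} |j. j < n}) \<subseteq> {..<N}"
      using inN by auto
    fix x y assume "{x, y} \<in> snd ({0..<n}, {{j, (j + 1) mod n} |j. j < n})"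
    then obtain j where j: "j < n" "{x, y} = {j, (j+1) mod n}" by auto
    hence "(x = j \<and> y = (j+1) mod n) \<or> (x = (j+1) mod n \<and> y = j)" by (auto simp: doubleton_eq_iff)
    moreover have "c (cyc ! ((j+1) mod n)) (cyc ! j) = col"
      using e[OF j(1)] csym inN[OF j(1)] inN[of "(j+1) mod n"] ne2[OF j(1)] n by fastforce
    ultimately show "c (cyc ! x) (cyc ! y) = col" using e[OF j(1)] by auto
  qed
qed

lemma bip_copy:
  assumes XY: "X \<subseteq> {..<N}" "Y \<subseteq> {..<N}" "X \<inter> Y = {}" "card X = m1" "card Y = m2" "finite X" "finite Y"
    and col: "\<forall>x\<in>X. \<forall>y\<in>Y. c x y = col"
    and csym: "\<forall>x y. x < N \<longrightarrow> y < N \<longrightarrow> x \<noteq> y \<longrightarrow> c x y = c y x"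
  shows "has_mono_copy N c col (complete_bipartite m1 m2)"
proof -
  obtain hX where hX: "bij_betw hX {0..<m1} X" using ex_bij_betw_nat_finite[OF XY(6)] XY(4) by blast
  obtain hY where hY: "bij_betw hY {0..<m2} Y" using ex_bij_betw_nat_finite[OF XY(7)] XY(5) by blast
  define \<phi> where "\<phi> = (\<lambda>i. if i < m1 then hX i else hY (i - m1))"
  have phX: "\<And>i. i < m1 \<Longrightarrow> \<phi> i \<in> X" unfolding \<phi>_def using hX by (auto simp: bij_betw_def)
  have phY: "\<And>i. m1 \<le> i \<Longrightarrow> i < m1 + m2 \<Longrightarrow> \<phi> i \<in> Y" unfolding \<phi>_def using hY
    by (auto simp: bij_betw_def)
  have inj: "inj_on \<phi> {0..<m1+m2}"
  proof (rule inj_onI)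
    fix i j assume i: "i \<in> {0..<m1+m2}" and j: "j \<in> {0..<m1+m2}" and eq: "\<phi> i = \<phi> j"
    show "i = j"
    proof (cases "i < m1"; cases "j < m1")
      assume "i < m1" "j < m1"
      thus ?thesis using eq hX unfolding \<phi>_def bij_betw_def inj_on_def by auto
    next
      assume a: "i < m1" "\<not> j < m1"
      hence "\<phi> i \<in> X" "\<phi> j \<in> Y" using phX phY j by auto
      thus ?thesis using eq XY(3) by auto
    next
      assume a: "\<not> i < m1" "j < m1"
      hence "\<phi> i \<in> Y" "\<phi> j \<in> X" using phX phY i by auto
      thus ?thesis using eq XY(3) by auto
    next
      assume a: "\<not> i < m1" "\<not> j < m1"
      hence "hY (i - m1) = hY (j - m1)" using eq unfolding \<phi>_def by simp
      moreover have "i - m1 \<in> {0..<m2}" "j - m1 \<in> {0..<m2}" using a i j by auto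
      ultimately have "i - m1 = j - m1" using hY unfolding bij_betw_def inj_on_def by blast
      thus ?thesis using a by simp
    qed
  qed
  show ?thesis unfolding has_mono_copy_def complete_bipartite_def
  proof (intro exI[of _ \<phi>] conjI allI impI)
    show "inj_on \<phi> (fst ({0..<m1 + m2}, {{i, j} |i j. i < m1 \<and> m1 \<le> j \<and> j < m1 + m2}))"
      using inj by simp
    show "\<phi> ` fst ({0..<m1 + m2}, {{i, j} |i j. i < m1 \<and> m1 \<le> j \<and> j < m1 + m2}) \<subseteq> {..<N}"
    proof
      fix z assume "z \<in> \<phi> ` fst ({0..<m1 + m2}, {{i, j} |i j. i < m1 \<and> m1 \<le> j \<and> j < m1 + m2})"
      then obtain i where i: "i < m1 + m2" "z = \<phi> i" by auto
      show "z \<in> {..<N}"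
      proof (cases "i < m1")
        case True thus ?thesis using phX[OF True] i XY(1) by auto
      next
        case False hence "\<phi> i \<in> Y" using phY i by simp
        thus ?thesis using i XY(2) by auto
      qed
    qed
    fix x y assume "{x, y} \<in> snd ({0..<m1 + m2}, {{i, j} |i j. i < m1 \<and> m1 \<le> j \<and> j < m1 + m2})"
    then obtain i j where ij: "i < m1" "m1 \<le> j" "j < m1 + m2" "{x, y} = {i, j}" by auto
    have a: "\<phi> i \<in> X" "\<phi> j \<in> Y" using phX phY ij by auto
    hence c1: "c (\<phi> i) (\<phi> j) = col" using col by blast
    have "\<phi> i \<noteq> \<phi> j" "\<phi> i < N" "\<phi> j < N" using a XY(1-3) by auto
    hence c2: "c (\<phi> j) (\<phi> i) = col" using c1 csym by metis
    have "(x = i \<and> y = j) \<or> (x = j \<and> y = i)" using ij(4) by (auto simp: doubleton_eq_iff)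
    thus "c (\<phi> x) (\<phi> y) = col" using c1 c2 by auto
  qed
qed


lemma log_bound:
  fixes N :: nat
  assumes "1 \<le> N"
  shows "N \<le> 2 ^ nat \<lceil>log 2 (real N)\<rceil> \<and> 0 \<le> \<lceil>log 2 (real N)\<rceil>"
proof -
  let ?L = "\<lceil>log 2 (real N)\<rceil>"
  have l0: "0 \<le> log 2 (real N)" using assms by simp
  hence L0: "0 \<le> ?L" by simp
  have "real N = 2 powr (log 2 (real N))" using assms by simp
  also have "\<dots> \<le> 2 powr (real (nat ?L))"
    apply (rule powr_mono) using L0 by (simp_all add: le_of_int_ceiling)
  also have "\<dots> = 2 ^ nat ?L" by (simp add: powr_realpow)
  finally have "real N \<le> real (2 ^ nat ?L)" by simp
  hence "N \<le> 2 ^ nat ?L" by linarith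
  thus ?thesis using L0 by simp
qed

theorem theorem2p9:
  fixes t m1 m2 :: nat and ns :: "nat list"
  assumes "t \<ge> 1" and "m1 \<ge> 1" and "m2 \<ge> 1"
    and "length ns = t"
    and "\<forall>i < t. ns ! i \<ge> 1 \<and> ns ! i \<le> m2 \<and>
           int (ns ! i) \<ge> 2 * \<lceil>log 2 (real (f_seq t m1 m2))\<rceil> + 2"
  shows "ramsey_number (map cycle_graph ns @ [complete_bipartite m1 m2]) \<le> f_seq t m1 m2"
proof -
  obtain t' where tt: "t = Suc t'" using assms(1) by (cases t) auto
  define N where "N = f_seq t m1 m2"
  define K where "K = nat \<lceil>log 2 (real N)\<rceil>"
  define Gs where "Gs = map cycle_graph ns @ [complete_bipartite m1 m2]"
  have N1: "1 \<le> N" unfolding N_def tt using f_ge[of m1 m2 t'] assms(2) by linarith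
  have NK: "N \<le> 2^K" and L0: "0 \<le> \<lceil>log 2 (real N)\<rceil>" using log_bound[OF N1] unfolding K_def by auto
  have nsb: "\<forall>i<t. 2*K+2 \<le> ns!i \<and> ns!i \<le> m2"
  proof (intro allI impI)
    fix i assume i: "i < t"
    hence "int (ns ! i) \<ge> 2 * \<lceil>log 2 (real N)\<rceil> + 2" "ns ! i \<le> m2" using assms(5) unfolding N_def by auto
    moreover have "int K = \<lceil>log 2 (real N)\<rceil>" unfolding K_def using L0 by simp
    ultimately show "2*K+2 \<le> ns!i \<and> ns!i \<le> m2" by linarith
  qed
  have lG: "length Gs = Suc t" unfolding Gs_def using assms(4) by simp
  have G1: "\<And>i. i < t \<Longrightarrow> Gs ! i = cycle_graph (ns ! i)" unfolding Gs_def using assms(4) by (simp add: nth_append)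
  have G2: "Gs ! t = complete_bipartite m1 m2" unfolding Gs_def using assms(4) by (simp add: nth_append)
  have K1: "1 \<le> K"
  proof (rule ccontr)
    assume "\<not> 1 \<le> K" hence "K = 0" by simp
    hence "N \<le> 1" using NK by simp
    moreover have "82 \<le> N" unfolding N_def tt using f_ge[of m1 m2 t'] assms(2,3) by linarith
    ultimately show False by simp
  qed
  have P: "\<forall>c. is_colouring N (length Gs) c \<longrightarrow> (\<exists>i < length Gs. has_mono_copy N c (i + 1) (Gs ! i))"
  proof (intro allI impI)
    fix c assume col: "is_colouring N (length Gs) c"
    have csym: "\<forall>x y. x < N \<longrightarrow> y < N \<longrightarrow> x \<noteq> y \<longrightarrow> c x y = c y x" using col unfolding is_colouring_def by blast
    have csymV: "\<forall>x\<in>{..<N}. \<forall>y\<in>{..<N}. x \<noteq> y \<longrightarrow> c x y = c y x" using csym by auto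
    have rng: "\<And>x y. x < N \<Longrightarrow> y < N \<Longrightarrow> x \<noteq> y \<Longrightarrow> c x y \<in> {1..Suc t}"
      using col lG unfolding is_colouring_def by auto
    have fK: "f_seq t m1 m2 \<le> 2^K" using NK unfolding N_def .
    have cN: "f_seq t m1 m2 \<le> card {..<N}" unfolding N_def by simp
    have "(\<exists>i<t. cyc_col c (Suc i) (ns!i) {..<N}) \<or> hole_col c t m1 m2 {..<N}"
      using claimD[OF claim_all[of t'] assms(2) assms(3) assms(4)[unfolded tt] nsb[unfolded tt]
          fK[unfolded tt] _ cN[unfolded tt] csymV] tt by simp
    thus "\<exists>i < length Gs. has_mono_copy N c (i + 1) (Gs ! i)"
    proof
      assume "\<exists>i<t. cyc_col c (Suc i) (ns!i) {..<N}"
      then obtain i where i: "i < t" "cyc_col c (Suc i) (ns!i) {..<N}" by blast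
      then obtain cyc where cy: "length cyc = ns ! i" "distinct cyc" "set cyc \<subseteq> {..<N}"
        "successively (\<lambda>u v. c u v = Suc i) cyc" "c (last cyc) (hd cyc) = Suc i" unfolding cyc_col_def by blast
      have "2 \<le> ns ! i" using nsb i(1) K1 by fastforce
      hence "has_mono_copy N c (Suc i) (cycle_graph (ns ! i))" using cycle_copy[OF _ cy csym] by blast
      thus ?thesis using G1[OF i(1)] i(1) lG by (intro exI[of _ i]) simp
    next
      assume "hole_col c t m1 m2 {..<N}"
      then obtain X Y where XY: "X \<subseteq> {..<N}" "Y \<subseteq> {..<N}" "X \<inter> Y = {}" "card X = m1" "card Y = m2"
        "finite X" "finite Y" "\<forall>x\<in>X. \<forall>y\<in>Y. c x y \<notin> {1..t}" unfolding hole_col_def by blast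
      have "\<forall>x\<in>X. \<forall>y\<in>Y. c x y = Suc t"
      proof (intro ballI)
        fix x y assume "x \<in> X" "y \<in> Y"
        hence "x < N" "y < N" "x \<noteq> y" "c x y \<notin> {1..t}" using XY by auto
        hence "c x y \<in> {1..Suc t}" "c x y \<notin> {1..t}" using rng by auto
        thus "c x y = Suc t" by auto
      qed
      hence "has_mono_copy N c (Suc t) (complete_bipartite m1 m2)" using bip_copy[OF XY(1-7) _ csym] by blast
      thus ?thesis using G2 lG by (intro exI[of _ t]) simp
    qed
  qed
  have "ramsey_number Gs \<le> N" unfolding ramsey_number_def by (rule Least_le) (rule P)
  thus ?thesis unfolding Gs_def N_def .
qed

end
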